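(* If an $\mathbf F_{q^2}$-linear $[(n,k,m;\delta,d_f)]_q$ convolutional stabilizer code exists, then there exists an $(n,(n-k)/2,\delta)_{q^2}$ convolutional code $C$ with $C\subseteq C^{\perp_h}$ such that $d_f=\mathrm{wt}(C^{\perp_h}\setminus C)$, the minimum weight of an element of $C^{\perp_h}\setminus C$.
   Context: Classical convolutional codes: An $(n,k,\delta)_q$ convolutional code $C$ is a submodule $\{u(D)G(D)\}$ of $\mathbf F_q[D]^n$ generated by a right-invertible $G(D)\in\mathbf F_q[D]^{k\times n}$ whose row degrees $\nu_i$ sum to $\delta$, the maximal degree of a $k\times k$ minor (the degree); the memory is $\max\nu_i$. The weight of an element of $\mathbf F_q[D]^n$ (or of a finitely supported sequence) is its number of nonzero coefficients. $\Gamma_q$ is the set of finitely supported sequences over $\mathbf F_q$, and $\sigma\colon\mathbf F_q[D]^n\to\Gamma_q$ maps $(u_0,\dots,u_{n-1})$ to the coefficient sequence of $\sum_iD^iu_i(D^n)$; codes are identified with their images. Hermitian inner product on $\Gamma_{q^2}$: $\langle u\mid v\rangle_h=\sum_iu_iv_i^q$; $C^{\perp_h}$ is the Hermitian dual. Quantum setup: $X(a)|x\rangle=|x+a\rangle$, $Z(b)|x\rangle=\omega^{\mathrm{tr}(bx)}|x\rangle$ ($\omega=e^{2\pi i/p}$, $p=\mathrm{char}\,\mathbf F_q$), $I=X(0)$. $P_t$ is the group generated by $((t+1)n+m)$-fold tensor products of the $X(a),Z(b)$, with center $Z_t$; $P_\infty$ is the group of infinite tensor products of such operators with all but finitely many factors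 $I$ (direct limit along $M\mapsto M\otimes I^{\otimes n}$). For abelian $S_0\le P_0$, $S_t=\langle N\otimes I^{\otimes n},I^{\otimes tn}\otimes M: N\in S_{t-1},M\in S_0\rangle$; assume (S1) $I^{\otimes tn}\otimes M$ and $N\otimes I^{\otimes tn}$ commute for $M,N\in S_0$, $t\ge1$; (S2) $\dim_{\mathbf F_q}S_tZ_t/Z_t=(t+1)(n-k)$; (S3) $S_t\cap Z_t$ trivial. The stabilizer is $S=\langle I^{\otimes tn}\otimes M\otimes I^{\otimes\infty}: t\ge0,M\in S_0\rangle\le P_\infty$, and its $+1$-eigenspace is an $[(n,k,m)]_q$ convolutional stabilizer code. The weight of $E\in P_\infty$ is its number of non-identity factors; the free distance is $d_f=\min\{\mathrm{wt}(e): e\in C_{P_\infty}(S)\setminus Z(P_\infty)S\}$ ($C_{P_\infty}(S)$ the centralizer, $Z(P_\infty)$ the center). With a normal basis $(\beta,\beta^q)$ of $\mathbf F_{q^2}/\mathbf F_q$, $\tau(\omega^cX(a_0)Z(b_0)\otimes\cdots)=(\beta a_0+\beta^qb_0,\dots)\in\Gamma_{q^2}$. The code is $\mathbf F_{q^2}$-linear if $\tau(S)$ is an $\mathbf F_{q^2}$-space; its degree $\delta$ is the degree of the classical convolutional code $\sigma^{-1}\tau(S)$. $[(n,k,m;\delta,d_f)]_q$ denotes such a code with degree $\delta$ and free distance $d_f$. *)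

theory Defs
  imports "HOL-Algebra.Generated_Groups" "HOL-Algebra.Coset"
    "HOL-Computational_Algebra.Polynomial"
    "Jordan_Normal_Form.Determinant" "Jordan_Normal_Form.DL_Submatrix"
begin

section \<open>Finite fields: F_{q^2} is the type 'b, F_q and F_p are its subfields\<close>

definition Fq :: "nat \<Rightarrow> 'b::field set" where
  "Fq q = {x. x ^ q = x}"

definition Fp :: "'b::field set" where
  "Fp = {x. x ^ CHAR('b) = x}"

text \<open>Trace from F_q (q = p^r) to the prime field F_p (embedded in 'b).\<close>
definition trq :: "nat \<Rightarrow> 'b::field \<Rightarrow> 'b" where
  "trq q x = (\<Sum>i < (LEAST r. CHAR('b) ^ r = q). x ^ (CHAR('b) ^ i))"

text \<open>An element omega^c X(a) Z(b) (infinite tensor product, all but finitely many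
  factors I) is represented by the triple (c, a, b), with c in the prime field F_p
  (standing for Z_p) and a, b finitely supported sequences over F_q.
  Since Z(b) X(a') = omega^(tr(b a')) X(a') Z(b), the operator product is
  (c,a,b)(c',a',b') = (c + c' + tr(sum_i b_i a'_i), a + a', b + b').\<close>

type_synonym 'b pauli = "'b \<times> (nat \<Rightarrow> 'b) \<times> (nat \<Rightarrow> 'b)"

definition pauli_supp :: "'b::zero pauli \<Rightarrow> nat set" where
  "pauli_supp E = {i. fst (snd E) i \<noteq> 0 \<or> snd (snd E) i \<noteq> 0}"

definition pauli_mult :: "nat \<Rightarrow> 'b::field pauli \<Rightarrow> 'b pauli \<Rightarrow> 'b pauli" where
  "pauli_mult q E F = (case E of (c, a, b) \<Rightarrow> case F of (c', a', b') \<Rightarrow>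
     (c + c' + trq q (\<Sum>i\<in>{i. b i \<noteq> 0}. b i * a' i),
      \<lambda>i. a i + a' i, \<lambda>i. b i + b' i))"

definition pauli_group :: "nat \<Rightarrow> ('b::field pauli) monoid" where
  "pauli_group q = \<lparr> partial_object.carrier = {(c, a, b). c \<in> Fp \<and> (\<forall>i. a i \<in> Fq q \<and> b i \<in> Fq q)
                                   \<and> finite {i. a i \<noteq> 0 \<or> b i \<noteq> 0}},
                     monoid.mult = pauli_mult q,
                     monoid.one = (0, \<lambda>_. 0, \<lambda>_. 0) \<rparr>"

text \<open>P_t viewed inside P_infinity: N-fold tensor products (N = (t+1)n+m), i.e. the
  operators acting as identity outside the first N positions.\<close>
definition pauli_win :: "nat \<Rightarrow> nat \<Rightarrow> ('b::field pauli) monoid" where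
  "pauli_win q N = (pauli_group q)\<lparr> partial_object.carrier := {E \<in> carrier (pauli_group q). pauli_supp E \<subseteq> {..<N}} \<rparr>"

definition center_of :: "('a, 'm) monoid_scheme \<Rightarrow> 'a set" where
  "center_of G = {z \<in> carrier G. \<forall>g \<in> carrier G. z \<otimes>\<^bsub>G\<^esub> g = g \<otimes>\<^bsub>G\<^esub> z}"

definition pshift :: "nat \<Rightarrow> 'b::zero pauli \<Rightarrow> 'b pauli" where
  "pshift s E = (case E of (c, a, b) \<Rightarrow>
     (c, \<lambda>i. if s \<le> i then a (i - s) else 0, \<lambda>i. if s \<le> i then b (i - s) else 0))"

fun stab_t :: "nat \<Rightarrow> nat \<Rightarrow> 'b::field pauli set \<Rightarrow> nat \<Rightarrow> 'b pauli set" where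
  "stab_t q n S0 0 = S0"
| "stab_t q n S0 (Suc t) =
     generate (pauli_group q) (stab_t q n S0 t \<union> pshift (Suc t * n) ` S0)"

definition stab :: "nat \<Rightarrow> nat \<Rightarrow> 'b::field pauli set \<Rightarrow> 'b pauli set" where
  "stab q n S0 = generate (pauli_group q) {pshift (t * n) M | t M. M \<in> S0}"

definition conv_stab_code :: "nat \<Rightarrow> nat \<Rightarrow> nat \<Rightarrow> nat \<Rightarrow> 'b::field pauli set \<Rightarrow> bool" where
  "conv_stab_code q n k m S0 \<longleftrightarrow>
     subgroup S0 (pauli_win q (n + m)) \<and>
     (\<forall>M \<in> S0. \<forall>N \<in> S0. pauli_mult q M N = pauli_mult q N M) \<and>
     (\<forall>t \<ge> 1. \<forall>M \<in> S0. \<forall>N \<in> S0.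
        pauli_mult q (pshift (t * n) M) N = pauli_mult q N (pshift (t * n) M)) \<and>
     (\<forall>t. card ((\<lambda>s. center_of (pauli_win q ((t + 1) * n + m)) #>\<^bsub>pauli_win q ((t + 1) * n + m)\<^esub> s)
                  ` stab_t q n S0 t) = q ^ ((t + 1) * (n - k))) \<and>
     (\<forall>t. stab_t q n S0 t \<inter> center_of (pauli_win q ((t + 1) * n + m))
            = {\<one>\<^bsub>pauli_group q\<^esub>})"

definition pauli_wt :: "'b::zero pauli \<Rightarrow> nat" where
  "pauli_wt E = card (pauli_supp E)"

definition free_distance :: "nat \<Rightarrow> nat \<Rightarrow> 'b::field pauli set \<Rightarrow> nat \<Rightarrow> bool" where
  "free_distance q n S0 d \<longleftrightarrow>
     (let P = pauli_group q; S = stab q n S0;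
          Cent = {e \<in> carrier P. \<forall>s \<in> S. e \<otimes>\<^bsub>P\<^esub> s = s \<otimes>\<^bsub>P\<^esub> e};
          ZS = {z \<otimes>\<^bsub>P\<^esub> s | z s. z \<in> center_of P \<and> s \<in> S};
          A = Cent - ZS
      in d \<in> pauli_wt ` A \<and> (\<forall>e \<in> A. d \<le> pauli_wt e))"

definition tau :: "nat \<Rightarrow> 'b::field \<Rightarrow> 'b pauli \<Rightarrow> (nat \<Rightarrow> 'b)" where
  "tau q \<beta> E = (case E of (c, a, b) \<Rightarrow> \<lambda>i. \<beta> * a i + \<beta> ^ q * b i)"

definition normal_basis :: "nat \<Rightarrow> 'b::field \<Rightarrow> bool" where
  "normal_basis q \<beta> \<longleftrightarrow>
     (\<forall>x \<in> Fq q. \<forall>y \<in> Fq q. x * \<beta> + y * \<beta> ^ q = 0 \<longrightarrow> x = 0 \<and> y = 0)"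

definition Gamma :: "('b::zero \<Rightarrow> bool) \<Rightarrow> (nat \<Rightarrow> 'b) set" where
  "Gamma P = {v. finite {i. v i \<noteq> 0} \<and> (\<forall>i. P (v i))}"

definition is_Fq2_space :: "(nat \<Rightarrow> 'b::field) set \<Rightarrow> bool" where
  "is_Fq2_space T \<longleftrightarrow> T \<subseteq> Gamma (\<lambda>_. True) \<and> (\<lambda>_. 0) \<in> T \<and>
     (\<forall>u \<in> T. \<forall>v \<in> T. (\<lambda>i. u i + v i) \<in> T) \<and> (\<forall>x. \<forall>u \<in> T. (\<lambda>i. x * u i) \<in> T)"

text \<open>sigma: (u_0,...,u_{n-1}) \<mapsto> coefficient sequence of sum_i D^i u_i(D^n).\<close>
definition sigma :: "nat \<Rightarrow> 'b::zero poly vec \<Rightarrow> (nat \<Rightarrow> 'b)" where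
  "sigma n u = (\<lambda>j. coeff (u $ (j mod n)) (j div n))"

definition seq_wt :: "(nat \<Rightarrow> 'b::zero) \<Rightarrow> nat" where
  "seq_wt v = card {i. v i \<noteq> 0}"

definition herm :: "nat \<Rightarrow> (nat \<Rightarrow> 'b::field) \<Rightarrow> (nat \<Rightarrow> 'b) \<Rightarrow> 'b" where
  "herm q u v = (\<Sum>i\<in>{i. u i \<noteq> 0}. u i * v i ^ q)"

definition herm_dual :: "nat \<Rightarrow> (nat \<Rightarrow> 'b::field) set \<Rightarrow> (nat \<Rightarrow> 'b) set" where
  "herm_dual q C = {v \<in> Gamma (\<lambda>_. True). \<forall>u \<in> C. herm q u v = 0}"

definition row_deg :: "'b::zero poly mat \<Rightarrow> nat \<Rightarrow> nat" where
  "row_deg G i = Max {degree (G $$ (i, j)) | j. j < dim_col G}"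

definition conv_code :: "nat \<Rightarrow> nat \<Rightarrow> nat \<Rightarrow> 'b::field poly vec set \<Rightarrow> bool" where
  "conv_code n k \<delta> C \<longleftrightarrow>
     (\<exists>G \<in> carrier_mat k n.
        (\<exists>H \<in> carrier_mat n k. G * H = 1\<^sub>m k) \<and>
        (\<Sum>i<k. row_deg G i) = \<delta> \<and>
        \<delta> = Max {degree (det (submatrix G {..<k} J)) | J. J \<subseteq> {..<n} \<and> card J = k} \<and>
        C = {transpose_mat G *\<^sub>v u | u. u \<in> carrier_vec k})"

end

theory Submission
  imports Defs "HOL-Number_Theory.Cong"
begin

lemma char_prime_fin: "prime CHAR('b::{finite,field})"
proof -
  have "CHAR('b) > 0" by (rule finite_imp_CHAR_pos) simp
  then show ?thesis using prime_CHAR_semidom by blast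
qed

lemma of_nat_mult_closed:
  fixes B :: "'b::ring_1 set"
  assumes "0 \<in> B" "\<And>x y. x \<in> B \<Longrightarrow> y \<in> B \<Longrightarrow> x + y \<in> B" "y \<in> B"
  shows "of_nat m * y \<in> B"
  by (induction m) (auto simp: algebra_simps assms)

lemma subgroup_grow:
  fixes B :: "'b::{finite,field} set" and x :: 'b
  assumes B0: "0 \<in> B" and Badd: "\<And>x y. x \<in> B \<Longrightarrow> y \<in> B \<Longrightarrow> x + y \<in> B"
    and Bneg: "\<And>x. x \<in> B \<Longrightarrow> - x \<in> B" and xB: "x \<notin> B"
  defines "B' \<equiv> (\<lambda>(b, j). b + of_nat j * x) ` (B \<times> {..<CHAR('b)})"
  shows "card B' = CHAR('b) * card B" and "0 \<in> B'"
    and "\<And>u v. u \<in> B' \<Longrightarrow> v \<in> B' \<Longrightarrow> u + v \<in> B'"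
    and "\<And>u. u \<in> B' \<Longrightarrow> - u \<in> B'" and "B \<subseteq> B'" and "x \<in> B'"
proof -
  define p where "p = CHAR('b)"
  have pp: "prime p" unfolding p_def by (rule char_prime_fin)
  hence p1: "p > 1" by (rule prime_gt_1_nat)
  have inj: "inj_on (\<lambda>(b, j). b + of_nat j * x) (B \<times> {..<p})"
  proof (rule inj_onI, clarify)
    fix b j b' j' assume b: "b \<in> B" "b' \<in> B" and j: "j < p" "j' < p"
      and eq: "b + of_nat j * x = b' + of_nat j' * x"
    have "j = j'"
    proof (rule ccontr)
      assume ne: "j \<noteq> j'"
      have key: "\<And>j j' b b'. b \<in> B \<Longrightarrow> b' \<in> B \<Longrightarrow> j < p \<Longrightarrow> j' < j \<Longrightarrow>
          b + of_nat j * x = b' + of_nat j' * x \<Longrightarrow> False"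
      proof -
        fix j j' b b' assume b: "b \<in> B" "b' \<in> B" and j: "j < p" "j' < j"
          and eq: "b + of_nat j * (x::'b) = b' + of_nat j' * x"
        have jj: "(of_nat j :: 'b) = of_nat (j - j') + of_nat j'"
          using j by (metis le_add_diff_inverse2 less_imp_le of_nat_add)
        have "b + of_nat (j - j') * x + of_nat j' * x = b' + of_nat j' * x"
          using eq unfolding jj by (simp only: distrib_right add.assoc)
        hence "of_nat (j - j') * x = b' + - b" by (simp only: add_right_cancel) (simp add: algebra_simps)
        hence dB: "of_nat (j - j') * x \<in> B" using b Badd Bneg by metis
        have nd: "\<not> p dvd (j - j')" using j by (auto dest: dvd_imp_le)
        have cop: "coprime (j - j') p" using prime_imp_coprime[OF pp nd] by (simp add: coprime_commute)
        then obtain i where i: "[(j - j') * i = 1] (mod p)"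
          using cong_solve_coprime_nat[OF cop] by auto
        have "of_nat ((j - j') * i) = (of_nat 1 :: 'b)"
          using i unfolding p_def by (simp only: of_nat_eq_iff_cong_CHAR)
        hence "x = of_nat i * (of_nat (j - j') * x)"
          by (metis (no_types, lifting) mult.assoc mult.commute mult_1 of_nat_1 of_nat_mult)
        also have "\<dots> \<in> B" by (rule of_nat_mult_closed[OF B0 Badd dB])
        finally show False using xB by simp
      qed
      show False
      proof (cases "j' < j")
        case True then show False using key[OF b j(1) True eq] by simp
      next
        case False then have "j < j'" using ne by simp
        then show False using key[OF b(2) b(1) j(2) _ eq[symmetric]] by simp
      qed
    qed
    then show "b = b' \<and> j = j'" using eq by simp
  qed
  show "card B' = CHAR('b) * card B"
    unfolding B'_def using card_image[OF inj] p_def by (simp add: card_cartesian_product)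
  show "0 \<in> B'" unfolding B'_def
    by (rule rev_image_eqI[of "(0,0)"]) (use B0 p1 p_def in simp_all)
  show "B \<subseteq> B'" unfolding B'_def
  proof
    fix b assume "b \<in> B" then show "b \<in> (\<lambda>(b, j). b + of_nat j * x) ` (B \<times> {..<CHAR('b)})"
      by (intro rev_image_eqI[of "(b,0)"]) (use p1 p_def in simp_all)
  qed
  show "x \<in> B'" unfolding B'_def
    by (rule rev_image_eqI[of "(0,1)"]) (use B0 p1 p_def in simp_all)
  show "u + v \<in> B'" if "u \<in> B'" "v \<in> B'" for u v
  proof -
    from that obtain b j b' j' where u: "b \<in> B" "j < p" "u = b + of_nat j * x"
      and v: "b' \<in> B" "j' < p" "v = b' + of_nat j' * x" unfolding B'_def p_def by auto
    have "(of_nat ((j + j') mod p) :: 'b) = of_nat (j + j')"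
      unfolding p_def by (simp only: of_nat_eq_iff_cong_CHAR) (simp add: cong_def)
    hence "u + v = (b + b') + of_nat ((j + j') mod p) * x" using u v by (simp add: algebra_simps)
    moreover have "(j + j') mod p < p" using p1 by simp
    ultimately show ?thesis unfolding B'_def p_def using Badd[OF u(1) v(1)]
      by (intro rev_image_eqI[of "(b + b', (j + j') mod CHAR('b))"]) (simp_all add: p_def)
  qed
  show "- u \<in> B'" if "u \<in> B'" for u
  proof -
    from that obtain b j where u: "b \<in> B" "j < p" "u = b + of_nat j * x"
      unfolding B'_def p_def by auto
    have "(of_nat ((p - j) mod p) :: 'b) + of_nat j = of_nat (((p - j) mod p) + j)" by simp
    also have "\<dots> = of_nat 0"
      unfolding p_def by (simp only: of_nat_eq_iff_cong_CHAR) (use u(2) in \<open>simp add: cong_def p_def mod_add_left_eq\<close>)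
    finally have "(of_nat ((p - j) mod p) :: 'b) = - of_nat j" by (simp add: eq_neg_iff_add_eq_0)
    hence "- u = (- b) + of_nat ((p - j) mod p) * x" using u by (simp add: algebra_simps)
    moreover have "(p - j) mod p < p" using p1 by simp
    ultimately show ?thesis unfolding B'_def p_def using Bneg[OF u(1)]
      by (intro rev_image_eqI[of "(- b, (p - j) mod CHAR('b))"]) (simp_all add: p_def)
  qed
qed

lemma card_field_primepow: "\<exists>r. card (UNIV :: 'b::{finite,field} set) = CHAR('b) ^ r"
proof -
  have main: "\<And>B :: 'b set. 0 \<in> B \<Longrightarrow> (\<forall>x\<in>B. \<forall>y\<in>B. x + y \<in> B) \<Longrightarrow> (\<forall>x\<in>B. - x \<in> B)
      \<Longrightarrow> (\<exists>r. card B = CHAR('b) ^ r) \<Longrightarrow> \<exists>r. card (UNIV :: 'b set) = CHAR('b) ^ r"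
  proof -
    fix B :: "'b set"
    show "0 \<in> B \<Longrightarrow> (\<forall>x\<in>B. \<forall>y\<in>B. x + y \<in> B) \<Longrightarrow> (\<forall>x\<in>B. - x \<in> B)
      \<Longrightarrow> (\<exists>r. card B = CHAR('b) ^ r) \<Longrightarrow> \<exists>r. card (UNIV :: 'b set) = CHAR('b) ^ r"
    proof (induction "card (UNIV - B)" arbitrary: B rule: less_induct)
      case (less B)
      show ?case
      proof (cases "B = UNIV")
        case True then show ?thesis using less by simp
      next
        case False
        then obtain x where xB: "x \<notin> B" by auto
        define B' where "B' \<equiv> (\<lambda>(b, j). b + of_nat j * x) ` (B \<times> {..<CHAR('b)})"
        note g = subgroup_grow[of B x, folded B'_def]
        have g1: "card B' = CHAR('b) * card B" "0 \<in> B'" "\<forall>u\<in>B'. \<forall>v\<in>B'. u + v \<in> B'" "\<forall>u\<in>B'. - u \<in> B'"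
          "B \<subseteq> B'" "x \<in> B'" using g less.prems xB by auto
        have "card (UNIV - B') < card (UNIV - B)"
          by (rule psubset_card_mono) (use g1 xB in auto)
        moreover obtain r where "card B = CHAR('b) ^ r" using less.prems by auto
        hence "\<exists>r. card B' = CHAR('b) ^ r" using g1(1) by (metis power_Suc)
        ultimately show ?thesis using less.hyps[of B'] g1 by blast
      qed
    qed
  qed
  have ex: "\<exists>r. card {0::'b} = CHAR('b) ^ r" by (rule exI[of _ 0]) simp
  show ?thesis by (rule main[OF _ _ _ ex]) auto
qed

lemma pow_card_same:
  fixes x :: "'b::{finite,field}"
  shows "x ^ card (UNIV :: 'b set) = x"
proof (cases "x = 0")
  case False
  have "x * (\<Prod>y\<in>UNIV-{0}. x * y) = x * x ^ (card (UNIV :: 'b set) - 1) * \<Prod>(UNIV-{0})"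
    by (simp add: prod.distrib mult_ac)
  also have "x * x ^ (card (UNIV :: 'b set) - 1) = x ^ Suc (card (UNIV :: 'b set) - 1)"
    by (subst power_Suc) auto
  also have "Suc (card (UNIV :: 'b set) - 1) = card (UNIV :: 'b set)"
    using finite_UNIV_card_ge_0[where ?'a = 'b] by simp
  also have "(\<Prod>y\<in>UNIV-{0}. x * y) = (\<Prod>y\<in>UNIV-{0}. y)"
    by (rule prod.reindex_bij_witness[of _ "\<lambda>y. y / x" "\<lambda>y. x * y"]) (use False in auto)
  finally show ?thesis
    by simp
qed (use finite_UNIV_card_ge_0[where ?'a = 'b] in auto)

lemma tracepoly_nonroot:
  fixes A :: "'b::{finite,field} set"
  assumes r: "r \<ge> 1" and A: "CHAR('b) ^ (r - 1) < card A"
  shows "\<exists>x\<in>A. (\<Sum>i<r. x ^ (CHAR('b) ^ i)) \<noteq> 0"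
proof (rule ccontr)
  assume H: "\<not> ?thesis"
  define p where "p = CHAR('b)"
  have p1: "p > 1" unfolding p_def using char_prime_fin prime_gt_1_nat by blast
  define P :: "'b poly" where "P = (\<Sum>i<r. Polynomial.monom 1 (p ^ i))"
  have polyP: "poly P x = (\<Sum>i<r. x ^ (p ^ i))" for x
    unfolding P_def by (simp add: poly_sum poly_monom)
  have coeffP: "coeff P j = (\<Sum>i<r. if p ^ i = j then 1 else 0)" for j
    unfolding P_def by (simp add: coeff_sum coeff_monom)
  have "coeff P (p ^ (r - 1)) = (\<Sum>i<r. if i = r - 1 then 1 else 0)"
    unfolding coeffP using p1 by (intro sum.cong) (auto simp: power_inject_exp)
  also have "\<dots> = 1" using r by simp
  finally have P0: "P \<noteq> 0" by auto
  have "degree P \<le> p ^ (r - 1)"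
  proof (rule degree_le, intro allI impI)
    fix j assume j: "p ^ (r - 1) < j"
    have "\<And>i. i < r \<Longrightarrow> p ^ i \<le> p ^ (r - 1)" using p1 by (intro power_increasing) auto
    then show "coeff P j = 0" unfolding coeffP using j by (intro sum.neutral) (auto dest: le_less_trans)
  qed
  moreover have "card {x. poly P x = 0} \<le> degree P" by (rule card_poly_roots_bound[OF P0])
  moreover have "A \<subseteq> {x. poly P x = 0}" using H by (auto simp: polyP p_def)
  hence "card A \<le> card {x. poly P x = 0}" by (intro card_mono) auto
  ultimately show False using A p_def by simp
qed

locale ffq =
  fixes q :: nat and \<beta> :: "'b::{finite,field}"
  assumes cardq: "card (UNIV :: 'b set) = q ^ 2"
begin


lemma pc_prime: "prime CHAR('b)" by (rule char_prime_fin)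
lemma pc_gt1: "CHAR('b) > 1" using pc_prime prime_gt_1_nat by blast

lemma q_ge2: "q \<ge> 2"
proof -
  have "card {0::'b, 1} \<le> card (UNIV :: 'b set)" by (rule card_mono) auto
  hence "2 \<le> q ^ 2" using cardq by simp
  thus ?thesis by (metis One_nat_def Suc_1 less_2_cases_iff not_less one_power2 power_zero_numeral zero_less_Suc)
qed

lemma q_pow_ex: "\<exists>s. CHAR('b) ^ s = q"
proof -
  obtain R where R: "card (UNIV :: 'b set) = CHAR('b) ^ R" using card_field_primepow by blast
  have "q dvd CHAR('b) ^ R" using R cardq by (metis dvd_triv_left power2_eq_square)
  then obtain i where "q = CHAR('b) ^ i" using divides_primepow_nat[OF pc_prime] by auto
  thus ?thesis by auto
qed

definition "sq = (LEAST r. CHAR('b) ^ r = q)"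

lemma pc_sq: "CHAR('b) ^ sq = q" unfolding sq_def using q_pow_ex by (rule LeastI_ex)

lemma sq_ge1: "sq \<ge> 1" using pc_sq q_ge2 by (cases sq) auto

lemma trq_eq: "trq q (x::'b) = (\<Sum>i<sq. x ^ (CHAR('b) ^ i))" unfolding trq_def sq_def ..

lemma frob_add: "(x + y :: 'b) ^ (CHAR('b) ^ i) = x ^ (CHAR('b) ^ i) + y ^ (CHAR('b) ^ i)"
  using freshmans_dream'[where m = "CHAR('b)^i" and n = i and x = x and y = y]
  by (metis char_prime_fin)

lemma frob_neg: "(- x :: 'b) ^ (CHAR('b) ^ i) = - (x ^ (CHAR('b) ^ i))"
proof -
  have "0 < CHAR('b)" using pc_gt1 by simp
  hence "(x + - x) ^ (CHAR('b) ^ i) = 0" by simp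
  with \<open>(x + - x) ^ (CHAR('b) ^ i) = 0\<close> show ?thesis unfolding frob_add by (simp add: eq_neg_iff_add_eq_0 add.commute)
qed

lemma frob_diff: "(x - y :: 'b) ^ (CHAR('b) ^ i) = x ^ (CHAR('b) ^ i) - y ^ (CHAR('b) ^ i)"
  using frob_add[of x "- y" i] frob_neg[of y i] by simp

lemma frob_sum: "(sum f A :: 'b) ^ (CHAR('b) ^ i) = (\<Sum>j\<in>A. f j ^ (CHAR('b) ^ i))"
  by (rule freshmans_dream_sum'[OF pc_prime refl])

lemma q_add: "(x + y :: 'b) ^ q = x ^ q + y ^ q" using frob_add[of x y sq] pc_sq by simp
lemma q_neg: "(- x :: 'b) ^ q = - (x ^ q)" using frob_neg[of x sq] pc_sq by simp
lemma q_diff: "(x - y :: 'b) ^ q = x ^ q - y ^ q" using frob_diff[of x y sq] pc_sq by simp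
lemma q_sum: "(sum f A :: 'b) ^ q = (\<Sum>j\<in>A. f j ^ q)" using frob_sum[of f A sq] pc_sq by simp

lemma p_add: "(x + y :: 'b) ^ CHAR('b) = x ^ CHAR('b) + y ^ CHAR('b)" using frob_add[of x y 1] by simp
lemma p_neg: "(- x :: 'b) ^ CHAR('b) = - (x ^ CHAR('b))" using frob_neg[of x 1] by simp

lemma pow_q2: "(x :: 'b) ^ (q * q) = x"
  using pow_card_same[of x] cardq by (simp add: power2_eq_square)

lemma pow_qq: "((x :: 'b) ^ q) ^ q = x"
  using pow_q2 by (simp add: power_mult)

lemma sum_split_add: "(\<Sum>i<a + k. f i) = (\<Sum>i<a. f i) + (\<Sum>i<k. f (a + i :: nat)) "
proof (induction k)
  case (Suc k)
  have "(\<Sum>i<a + Suc k. f i) = (\<Sum>i<a + k. f i) + f (a + k)" by simp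
  then show ?case using Suc by (simp add: algebra_simps)
qed simp

lemma Fq_0[simp]: "0 \<in> Fq q" unfolding Fq_def using q_ge2 by simp
lemma Fq_1[simp]: "1 \<in> Fq q" unfolding Fq_def by simp
lemma Fq_add[simp]: "x \<in> Fq q \<Longrightarrow> y \<in> Fq q \<Longrightarrow> (x::'b) + y \<in> Fq q"
  unfolding Fq_def by (simp add: q_add)
lemma Fq_neg[simp]: "x \<in> Fq q \<Longrightarrow> - (x::'b) \<in> Fq q"
  unfolding Fq_def by (simp add: q_neg)
lemma Fq_diff[simp]: "x \<in> Fq q \<Longrightarrow> y \<in> Fq q \<Longrightarrow> (x::'b) - y \<in> Fq q"
  unfolding Fq_def by (simp add: q_diff)
lemma Fq_mult[simp]: "x \<in> Fq q \<Longrightarrow> y \<in> Fq q \<Longrightarrow> (x::'b) * y \<in> Fq q"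
  unfolding Fq_def by (simp add: power_mult_distrib)
lemma Fq_divide[simp]: "x \<in> Fq q \<Longrightarrow> y \<in> Fq q \<Longrightarrow> (x::'b) / y \<in> Fq q"
  unfolding Fq_def by (simp add: power_divide)
lemma Fq_sum: "(\<And>i. i \<in> A \<Longrightarrow> f i \<in> Fq q) \<Longrightarrow> (sum f A :: 'b) \<in> Fq q"
  by (induction A rule: infinite_finite_induct) auto

lemma Fp_0[simp]: "(0::'b) \<in> Fp" unfolding Fp_def using pc_gt1 by simp
lemma Fp_add[simp]: "x \<in> Fp \<Longrightarrow> y \<in> Fp \<Longrightarrow> (x::'b) + y \<in> Fp"
  unfolding Fp_def by (simp add: p_add)
lemma Fp_neg[simp]: "x \<in> Fp \<Longrightarrow> - (x::'b) \<in> Fp"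
  unfolding Fp_def by (simp add: p_neg)
lemma Fp_diff[simp]: "x \<in> Fp \<Longrightarrow> y \<in> Fp \<Longrightarrow> (x::'b) - y \<in> Fp"
  using Fp_add[of x "- y"] Fp_neg[of y] by simp

lemma trq_add: "trq q ((x::'b) + y) = trq q x + trq q y"
  unfolding trq_eq frob_add by (simp add: sum.distrib)
lemma trq_neg: "trq q (- (x::'b)) = - trq q x"
  unfolding trq_eq frob_neg by (simp add: sum_negf)
lemma trq_diff: "trq q ((x::'b) - y) = trq q x - trq q y"
  using trq_add[of x "- y"] trq_neg[of y] by simp
lemma trq_0[simp]: "trq q (0::'b) = 0"
  unfolding trq_eq by (intro sum.neutral ballI zero_power) (use pc_gt1 in simp)
lemma trq_sum: "trq q (sum f A :: 'b) = (\<Sum>i\<in>A. trq q (f i))"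
  by (induction A rule: infinite_finite_induct) (auto simp: trq_add)

lemma trq_Fp: assumes "x \<in> Fq q" shows "trq q (x::'b) \<in> Fp"
proof -
  define f where "f i = x ^ (CHAR('b) ^ i)" for i
  have xq: "x ^ q = x" using assms unfolding Fq_def by simp
  have "(trq q x) ^ CHAR('b) = (\<Sum>i<sq. (x ^ (CHAR('b) ^ i)) ^ CHAR('b))"
    unfolding trq_eq by (rule freshmans_dream_sum[OF pc_prime refl])
  also have "\<dots> = (\<Sum>i<sq. f (Suc i))" unfolding f_def by (simp add: power_mult[symmetric] mult.commute)
  also have "\<dots> = (\<Sum>i<sq. f i) + f sq - f 0"
  proof -
    have "(\<Sum>i<Suc sq. f i) = f 0 + (\<Sum>i<sq. f (Suc i))" by (rule sum.lessThan_Suc_shift)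
    moreover have "(\<Sum>i<Suc sq. f i) = (\<Sum>i<sq. f i) + f sq" by simp
    ultimately show ?thesis by (simp add: algebra_simps)
  qed
  also have "f sq = f 0" unfolding f_def using pc_sq xq by simp
  finally show ?thesis unfolding Fp_def trq_eq f_def by simp
qed

lemma card_Fq: "q \<le> card (Fq q :: 'b set)"
proof -
  define \<phi> :: "'b \<Rightarrow> 'b" where "\<phi> x = x ^ q - x" for x
  define R where "R = {y::'b. poly (Polynomial.monom 1 q + [:0, 1:]) y = 0}"
  define P :: "'b poly" where "P = Polynomial.monom 1 q + [:0, 1:]"
  have c01: "coeff [:0::'b, 1:] j = 0" if "j > 1" for j using coeff_eq_0[of "[:0::'b, 1:]" j] that by simp
  have cP: "coeff P q = 1" unfolding P_def using q_ge2 c01[of q] by (simp add: coeff_monom)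
  hence P0: "P \<noteq> 0" by auto
  have "degree P \<le> q" unfolding P_def using q_ge2
    by (intro degree_le) (auto simp: coeff_monom c01)
  hence cR: "card R \<le> q" using card_poly_roots_bound[OF P0] unfolding R_def P_def by simp
  have imR: "\<phi> x \<in> R" for x
  proof -
    have "(\<phi> x) ^ q = x - x ^ q" unfolding \<phi>_def q_diff pow_qq ..
    thus ?thesis unfolding R_def by (simp add: poly_monom \<phi>_def)
  qed
  define h where "h r = (SOME y. \<phi> y = r)" for r
  have h: "\<phi> (h (\<phi> x)) = \<phi> x" for x unfolding h_def by (rule someI_ex) blast
  have inj: "inj (\<lambda>x. (\<phi> x, x - h (\<phi> x)))" by (rule injI) auto
  have mapsto: "(\<lambda>x. (\<phi> x, x - h (\<phi> x))) ` UNIV \<subseteq> R \<times> Fq q"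
  proof clarify
    fix x
    have "(x - h (\<phi> x)) ^ q = x ^ q - h (\<phi> x) ^ q" by (rule q_diff)
    also have "\<dots> = x - h (\<phi> x)" using h[of x] unfolding \<phi>_def by (simp add: algebra_simps)
    finally show "\<phi> x \<in> R \<and> x - h (\<phi> x) \<in> Fq q" using imR unfolding Fq_def by simp
  qed
  have "q * q = card (UNIV :: 'b set)" using cardq by (simp add: power2_eq_square)
  also have "\<dots> = card ((\<lambda>x. (\<phi> x, x - h (\<phi> x))) ` UNIV)" using card_image[OF inj] by simp
  also have "\<dots> \<le> card (R \<times> (Fq q :: 'b set))" using mapsto by (intro card_mono) auto
  also have "\<dots> = card R * card (Fq q :: 'b set)" by (rule card_cartesian_product)
  also have "\<dots> \<le> q * card (Fq q :: 'b set)" using cR by simp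
  finally show ?thesis using q_ge2 by simp
qed

lemma trq_nondeg: assumes "y \<in> Fq q" "y \<noteq> (0::'b)" shows "\<exists>x\<in>Fq q. trq q (y * x) \<noteq> 0"
proof -
  have "CHAR('b) ^ (sq - 1) < CHAR('b) ^ sq" using pc_gt1 sq_ge1 by (intro power_strict_increasing) auto
  hence "CHAR('b) ^ (sq - 1) < card (Fq q :: 'b set)" using pc_sq card_Fq by simp
  then obtain w :: 'b where w: "w \<in> Fq q" "trq q w \<noteq> 0"
    using tracepoly_nonroot[OF sq_ge1, of "Fq q :: 'b set"] unfolding trq_eq by blast
  show ?thesis using w assms by (intro bexI[of _ "w / y"]) auto
qed

lemma trq_abs: "\<exists>z::'b. trq q (z + z ^ q) \<noteq> 0"
proof -
  have eq: "trq q (z + z ^ q) = (\<Sum>i<sq + sq. z ^ (CHAR('b) ^ i))" for z :: 'b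
  proof -
    have "trq q (z + z ^ q) = trq q z + trq q (z ^ q)" by (rule trq_add)
    hence "trq q (z + z ^ q) = (\<Sum>i<sq. z ^ (CHAR('b) ^ i)) + (\<Sum>i<sq. (z ^ q) ^ (CHAR('b) ^ i))"
      by (simp only: trq_eq)
    also have "(\<Sum>i<sq. (z ^ q) ^ (CHAR('b) ^ i)) = (\<Sum>i<sq. z ^ (CHAR('b) ^ (sq + i)))"
      using pc_sq by (simp add: power_mult[symmetric] power_add)
    finally show ?thesis by (simp add: sum_split_add)
  qed
  have "CHAR('b) ^ (sq + sq - 1) < CHAR('b) ^ (sq + sq)" using pc_gt1 sq_ge1 by (intro power_strict_increasing) auto
  also have "\<dots> = card (UNIV :: 'b set)" using pc_sq cardq by (simp add: power_add power2_eq_square)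
  finally obtain z :: 'b where "(\<Sum>i<sq + sq. z ^ (CHAR('b) ^ i)) \<noteq> 0"
    using tracepoly_nonroot[of "sq + sq" UNIV] sq_ge1 by auto
  thus ?thesis using eq by metis
qed

end


definition CP :: "nat \<Rightarrow> ((nat \<Rightarrow> 'b::field) \<times> (nat \<Rightarrow> 'b)) set" where
  "CP q = {(a, b). (\<forall>i. a i \<in> Fq q \<and> b i \<in> Fq q) \<and> finite {i. a i \<noteq> 0 \<or> b i \<noteq> 0}}"

definition supp2 :: "(nat \<Rightarrow> 'b::zero) \<times> (nat \<Rightarrow> 'b) \<Rightarrow> nat set" where
  "supp2 x = {i. fst x i \<noteq> 0 \<or> snd x i \<noteq> 0}"

definition padd :: "(nat \<Rightarrow> 'b::plus) \<times> (nat \<Rightarrow> 'b) \<Rightarrow> (nat \<Rightarrow> 'b) \<times> (nat \<Rightarrow> 'b) \<Rightarrow> (nat \<Rightarrow> 'b) \<times> (nat \<Rightarrow> 'b)" where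
  "padd x y = (\<lambda>i. fst x i + fst y i, \<lambda>i. snd x i + snd y i)"

definition pneg :: "(nat \<Rightarrow> 'b::uminus) \<times> (nat \<Rightarrow> 'b) \<Rightarrow> (nat \<Rightarrow> 'b) \<times> (nat \<Rightarrow> 'b)" where
  "pneg x = (\<lambda>i. - fst x i, \<lambda>i. - snd x i)"

definition sp :: "nat \<Rightarrow> (nat \<Rightarrow> 'b::field) \<times> (nat \<Rightarrow> 'b) \<Rightarrow> (nat \<Rightarrow> 'b) \<times> (nat \<Rightarrow> 'b) \<Rightarrow> 'b" where
  "sp q x y = trq q (\<Sum>i\<in>{i. snd x i \<noteq> 0}. snd x i * fst y i) - trq q (\<Sum>i\<in>{i. snd y i \<noteq> 0}. snd y i * fst x i)"

definition shf :: "nat \<Rightarrow> (nat \<Rightarrow> 'b::zero) \<Rightarrow> nat \<Rightarrow> 'b" where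
  "shf s f = (\<lambda>i. if s \<le> i then f (i - s) else 0)"

lemma pauli_mult_simp: "pauli_mult q (c, a, b) (c', a', b') =
   (c + c' + trq q (\<Sum>i\<in>{i. b i \<noteq> 0}. b i * a' i), \<lambda>i. a i + a' i, \<lambda>i. b i + b' i)"
  unfolding pauli_mult_def by simp

lemma snd_pauli_mult: "snd (pauli_mult q E F) = padd (snd E) (snd F)"
  unfolding pauli_mult_def padd_def by (cases E; cases F) simp

lemma pshift_simp: "pshift s (c, a, b) = (c, shf s a, shf s b)"
  unfolding pshift_def shf_def by simp

lemma pshift0[simp]: "pshift 0 E = E"
  unfolding pshift_def by (cases E) simp

lemma shf_add: "shf (s1 + s2) f = shf s1 (shf s2 f)"
  unfolding shf_def by (auto simp: fun_eq_iff)

lemma carrier_P: "E \<in> carrier (pauli_group q) \<longleftrightarrow> fst E \<in> Fp \<and> snd E \<in> CP q"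
  unfolding pauli_group_def CP_def by (cases E) auto

lemma carrier_W0: "E \<in> carrier (pauli_win q N) \<longleftrightarrow> E \<in> carrier (pauli_group q) \<and> supp2 (snd E) \<subseteq> {..<N}"
  unfolding pauli_win_def pauli_supp_def supp2_def by (cases E) auto

lemma carrier_W: "E \<in> carrier (pauli_win q N) \<longleftrightarrow> fst E \<in> Fp \<and> snd E \<in> CP q \<and> supp2 (snd E) \<subseteq> {..<N}"
  unfolding carrier_W0 carrier_P by simp

lemma mult_P[simp]: "monoid.mult (pauli_group q) = pauli_mult q"
  unfolding pauli_group_def by simp
lemma mult_W[simp]: "monoid.mult (pauli_win q N) = pauli_mult q"
  unfolding pauli_win_def pauli_group_def by simp
lemma one_P[simp]: "one (pauli_group q) = (0, \<lambda>_. 0, \<lambda>_. 0)"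
  unfolding pauli_group_def by simp
lemma one_W[simp]: "one (pauli_win q N) = (0, \<lambda>_. 0, \<lambda>_. 0)"
  unfolding pauli_win_def pauli_group_def by simp

lemma sp_comm: "pauli_mult q E F = pauli_mult q F E \<longleftrightarrow> sp q (snd E) (snd F) = 0"
  unfolding pauli_mult_def sp_def by (cases E; cases F) (auto simp: add.commute fun_eq_iff)

lemma sp_antisym: "sp q y x = - sp q x y"
  unfolding sp_def by simp

context ffq
begin

lemma CP_add: "(x :: (nat \<Rightarrow> 'b) \<times> (nat \<Rightarrow> 'b)) \<in> CP q \<Longrightarrow> y \<in> CP q \<Longrightarrow> padd x y \<in> CP q"
proof -
  assume x: "x \<in> CP q" and y: "y \<in> CP q"
  obtain a b a' b' where xy: "x = (a, b)" "y = (a', b')" by (cases x; cases y) auto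
  have f: "finite ({i. a i \<noteq> 0 \<or> b i \<noteq> 0} \<union> {i. a' i \<noteq> 0 \<or> b' i \<noteq> 0})"
    using x y unfolding xy CP_def by auto
  have "finite {i. a i + a' i \<noteq> 0 \<or> b i + b' i \<noteq> 0}"
    by (rule finite_subset[OF _ f]) auto
  thus ?thesis using x y unfolding xy CP_def padd_def by auto
qed

lemma CP_neg: "(x :: (nat \<Rightarrow> 'b) \<times> (nat \<Rightarrow> 'b)) \<in> CP q \<Longrightarrow> pneg x \<in> CP q"
  unfolding CP_def pneg_def by (cases x) auto

lemma CP_0: "((\<lambda>_. 0), (\<lambda>_. 0 :: 'b)) \<in> CP q"
  unfolding CP_def by auto

lemma mult_closed: "(E :: 'b pauli) \<in> carrier (pauli_group q) \<Longrightarrow> F \<in> carrier (pauli_group q) \<Longrightarrow> pauli_mult q E F \<in> carrier (pauli_group q)"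
proof -
  assume E: "E \<in> carrier (pauli_group q)" and F: "F \<in> carrier (pauli_group q)"
  obtain c a b c' a' b' where e: "E = (c, a, b)" and f: "F = (c', a', b')" by (cases E; cases F) auto
  have "snd (pauli_mult q E F) \<in> CP q" unfolding snd_pauli_mult using E F CP_add carrier_P by blast
  moreover have "(\<Sum>i\<in>{i. b i \<noteq> 0}. b i * a' i) \<in> Fq q" using E F unfolding e f carrier_P CP_def
    by (auto intro!: Fq_sum)
  hence "fst (pauli_mult q E F) \<in> Fp" using E F trq_Fp unfolding e f carrier_P pauli_mult_simp by auto
  ultimately show ?thesis unfolding carrier_P by simp
qed

definition pinv :: "'b pauli \<Rightarrow> 'b pauli" where
  "pinv E = (case E of (c, a, b) \<Rightarrow> (- c + trq q (\<Sum>i\<in>{i. b i \<noteq> 0}. b i * a i), \<lambda>i. - a i, \<lambda>i. - b i))"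

lemma pinv_carrier: "(E :: 'b pauli) \<in> carrier (pauli_group q) \<Longrightarrow> pinv E \<in> carrier (pauli_group q)"
proof -
  assume E: "E \<in> carrier (pauli_group q)"
  obtain c a b where e: "E = (c, a, b)" by (cases E) auto
  have "(\<Sum>i\<in>{i. b i \<noteq> 0}. b i * a i) \<in> Fq q" using E unfolding e carrier_P CP_def
    by (auto intro!: Fq_sum)
  hence "fst (pinv E) \<in> Fp" using E trq_Fp unfolding e carrier_P pinv_def by auto
  moreover have "snd (pinv E) = pneg (snd E)" unfolding pinv_def pneg_def e by simp
  ultimately show ?thesis using E CP_neg unfolding carrier_P by simp
qed

lemma snd_pinv: "snd (pinv (E :: 'b pauli)) = pneg (snd E)"
  unfolding pinv_def pneg_def by (cases E) simp

lemma supp2_pneg: "supp2 (pneg (x :: (nat \<Rightarrow> 'b) \<times> (nat \<Rightarrow> 'b))) = supp2 x"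
  unfolding supp2_def pneg_def by simp

lemma pinv_W: "(E :: 'b pauli) \<in> carrier (pauli_win q N) \<Longrightarrow> pinv E \<in> carrier (pauli_win q N)"
  using pinv_carrier[of E] unfolding carrier_W carrier_P snd_pinv supp2_pneg by auto

lemma pinv_props: "pauli_mult q (E :: 'b pauli) (pinv E) = (0, \<lambda>_. 0, \<lambda>_. 0) \<and> pauli_mult q (pinv E) E = (0, \<lambda>_. 0, \<lambda>_. 0)"
proof -
  obtain c a b where e: "E = (c, a, b)" by (cases E) auto
  have s: "(\<Sum>i\<in>{i. b i \<noteq> 0}. b i * - a i) = - (\<Sum>i\<in>{i. b i \<noteq> 0}. b i * a i)"
    by (simp add: sum_negf)
  have s2: "(\<Sum>i\<in>{i. - b i \<noteq> 0}. - b i * a i) = - (\<Sum>i\<in>{i. b i \<noteq> 0}. b i * a i)"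
    by (simp add: sum_negf)
  show ?thesis unfolding e pinv_def by (simp add: pauli_mult_simp s s2 trq_neg sum_negf)
qed

lemma pinv_unique: assumes "pauli_mult q (E :: 'b pauli) y = (0, \<lambda>_. 0, \<lambda>_. 0)" shows "y = pinv E"
proof -
  obtain c a b where e: "E = (c, a, b)" by (cases E) auto
  obtain c' a' b' where y: "y = (c', a', b')" by (cases y) auto
  from assms have a': "a' = (\<lambda>i. - a i)" and b': "b' = (\<lambda>i. - b i)"
    unfolding e y pauli_mult_simp by (auto simp: fun_eq_iff eq_neg_iff_add_eq_0 add.commute)
  from assms have "c + c' + trq q (\<Sum>i\<in>{i. b i \<noteq> 0}. b i * a' i) = 0"
    unfolding e y pauli_mult_simp by simp
  hence "c' = - c + trq q (\<Sum>i\<in>{i. b i \<noteq> 0}. b i * a i)"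
    unfolding a' by (simp add: sum_negf trq_neg algebra_simps eq_neg_iff_add_eq_0)
  thus ?thesis unfolding y e pinv_def a' b' by simp
qed

lemma inv_P: "(E :: 'b pauli) \<in> carrier (pauli_group q) \<Longrightarrow> inv\<^bsub>pauli_group q\<^esub> E = pinv E"
  unfolding m_inv_def using pinv_carrier pinv_props pinv_unique
  by (intro the_equality) (auto)

lemma inv_W: "(E :: 'b pauli) \<in> carrier (pauli_win q N) \<Longrightarrow> inv\<^bsub>pauli_win q N\<^esub> E = pinv E"
  unfolding m_inv_def using pinv_W pinv_props pinv_unique
  by (intro the_equality) (auto)

lemma gen_closure:
  assumes H: "H \<subseteq> carrier (pauli_group q :: 'b pauli monoid)"
    and V0: "((\<lambda>_. 0), (\<lambda>_. 0)) \<in> V"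
    and Vadd: "\<And>x y. x \<in> V \<Longrightarrow> y \<in> V \<Longrightarrow> padd x y \<in> V"
    and Vneg: "\<And>x. x \<in> V \<Longrightarrow> pneg x \<in> V"
    and HV: "\<And>h. h \<in> H \<Longrightarrow> snd h \<in> V"
    and x: "x \<in> generate (pauli_group q) H"
  shows "x \<in> carrier (pauli_group q) \<and> snd x \<in> V"
  using x
proof (induction rule: generate.induct)
  case one
  then show ?case using V0 CP_0 Fp_0 unfolding carrier_P by simp
next
  case (incl h)
  then show ?case using H HV by auto
next
  case (inv h)
  then have "h \<in> carrier (pauli_group q)" using H by auto
  then show ?case using inv_P pinv_carrier snd_pinv HV[OF inv] Vneg by auto
next
  case (eng h1 h2)
  have "pauli_mult q h1 h2 \<in> carrier (pauli_group q)" using eng.IH mult_closed by blast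
  moreover have "snd (pauli_mult q h1 h2) \<in> V" unfolding snd_pauli_mult using eng.IH Vadd by blast
  ultimately show ?case by simp
qed

end

definition pshf :: "nat \<Rightarrow> (nat \<Rightarrow> 'b::zero) \<times> (nat \<Rightarrow> 'b) \<Rightarrow> (nat \<Rightarrow> 'b) \<times> (nat \<Rightarrow> 'b)" where
  "pshf s x = (shf s (fst x), shf s (snd x))"

lemma snd_pshift: "snd (pshift s E) = pshf s (snd E)"
proof -
  obtain c a b where "E = (c, a, b)" by (cases E) auto
  thus ?thesis by (simp add: pshift_def pshf_def shf_def)
qed

lemma fst_pshift: "fst (pshift s E) = fst E"
  unfolding pshift_def by (cases E) simp

lemma pshf_add: "pshf (s1 + s2) x = pshf s1 (pshf s2 x)"
  unfolding pshf_def shf_add by simp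

lemma pshf0: "pshf 0 x = x"
  unfolding pshf_def shf_def by simp

definition dlt :: "nat \<Rightarrow> 'b::zero \<Rightarrow> nat \<Rightarrow> 'b" where
  "dlt i x = (\<lambda>j. if j = i then x else 0)"

context ffq
begin

lemma CP_fin: "(x :: (nat \<Rightarrow> 'b) \<times> (nat \<Rightarrow> 'b)) \<in> CP q \<Longrightarrow> finite (supp2 x)"
  unfolding CP_def supp2_def by auto

lemma CP_Fq: "(x :: (nat \<Rightarrow> 'b) \<times> (nat \<Rightarrow> 'b)) \<in> CP q \<Longrightarrow> fst x i \<in> Fq q \<and> snd x i \<in> Fq q"
  unfolding CP_def by auto

lemma sum_supp_I:
  assumes "finite I" "{i. (f :: nat \<Rightarrow> 'b) i \<noteq> 0} \<subseteq> I"
  shows "(\<Sum>i\<in>{i. f i \<noteq> 0}. f i * g i) = (\<Sum>i\<in>I. f i * g i)"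
  by (rule sum.mono_neutral_left) (use assms in auto)

lemma sp_I:
  assumes "finite I" "supp2 x \<subseteq> I" "supp2 y \<subseteq> I"
  shows "sp q x y = trq q (\<Sum>i\<in>I. snd x i * fst y i - snd y i * fst (x :: (nat \<Rightarrow> 'b) \<times> (nat \<Rightarrow> 'b)) i)"
proof -
  have "(\<Sum>i\<in>{i. snd x i \<noteq> 0}. snd x i * fst y i) = (\<Sum>i\<in>I. snd x i * fst y i)"
    by (rule sum_supp_I) (use assms in \<open>auto simp: supp2_def\<close>)
  moreover have "(\<Sum>i\<in>{i. snd y i \<noteq> 0}. snd y i * fst x i) = (\<Sum>i\<in>I. snd y i * fst x i)"
    by (rule sum_supp_I) (use assms in \<open>auto simp: supp2_def\<close>)
  ultimately show ?thesis unfolding sp_def by (simp add: trq_diff sum_subtractf)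
qed

lemma supp2_padd: "supp2 (padd x y) \<subseteq> supp2 x \<union> supp2 (y :: (nat \<Rightarrow> 'b) \<times> (nat \<Rightarrow> 'b))"
  unfolding supp2_def padd_def by auto

lemma sp_add1:
  assumes "x1 \<in> CP q" "x2 \<in> CP q" "y \<in> CP q"
  shows "sp q (padd x1 x2) y = sp q x1 y + sp q x2 (y :: (nat \<Rightarrow> 'b) \<times> (nat \<Rightarrow> 'b))"
proof -
  define I where "I = supp2 x1 \<union> supp2 x2 \<union> supp2 y"
  have fI: "finite I" unfolding I_def using assms CP_fin by auto
  have "sp q (padd x1 x2) y = trq q (\<Sum>i\<in>I. snd (padd x1 x2) i * fst y i - snd y i * fst (padd x1 x2) i)"
    by (rule sp_I[OF fI]) (use supp2_padd[of x1 x2] in \<open>auto simp: I_def\<close>)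
  also have "\<dots> = trq q ((\<Sum>i\<in>I. snd x1 i * fst y i - snd y i * fst x1 i) + (\<Sum>i\<in>I. snd x2 i * fst y i - snd y i * fst x2 i))"
    unfolding padd_def by (simp add: sum.distrib[symmetric] algebra_simps)
  also have "\<dots> = sp q x1 y + sp q x2 y"
    unfolding trq_add by (subst (1 2) sp_I[OF fI]) (auto simp: I_def)
  finally show ?thesis .
qed

lemma sp_neg1: "sp q (pneg x) y = - sp q x (y :: (nat \<Rightarrow> 'b) \<times> (nat \<Rightarrow> 'b))"
proof -
  have e1: "{i. - snd x i \<noteq> 0} = {i. snd x i \<noteq> 0}" by simp
  show ?thesis unfolding sp_def pneg_def
    by (simp add: e1 sum_negf trq_neg)
qed

lemma sp_zero1: "sp q ((\<lambda>_. 0), (\<lambda>_. 0)) (y :: (nat \<Rightarrow> 'b) \<times> (nat \<Rightarrow> 'b)) = 0"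
  unfolding sp_def by simp

lemma shf_at: "shf s f (i + s) = f i" unfolding shf_def by simp

lemma supp2_pshf: "supp2 (pshf s x) = (\<lambda>i. i + s) ` supp2 (x :: (nat \<Rightarrow> 'b) \<times> (nat \<Rightarrow> 'b))"
proof
  show "supp2 (pshf s x) \<subseteq> (\<lambda>i. i + s) ` supp2 x"
  proof
    fix j assume j: "j \<in> supp2 (pshf s x)"
    then have "s \<le> j" unfolding supp2_def pshf_def shf_def by (auto split: if_splits)
    then show "j \<in> (\<lambda>i. i + s) ` supp2 x" using j
      by (intro rev_image_eqI[of "j - s"]) (auto simp: supp2_def pshf_def shf_def)
  qed
  show "(\<lambda>i. i + s) ` supp2 x \<subseteq> supp2 (pshf s x)"
    unfolding supp2_def pshf_def by (auto simp: shf_at)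
qed

lemma CP_pshf: "(x :: (nat \<Rightarrow> 'b) \<times> (nat \<Rightarrow> 'b)) \<in> CP q \<Longrightarrow> pshf s x \<in> CP q"
proof -
  assume x: "x \<in> CP q"
  have "finite (supp2 (pshf s x))" unfolding supp2_pshf using CP_fin[OF x] by simp
  moreover have "fst (pshf s x) i \<in> Fq q \<and> snd (pshf s x) i \<in> Fq q" for i
    using CP_Fq[OF x] unfolding pshf_def shf_def by auto
  ultimately show ?thesis unfolding CP_def supp2_def by (cases "pshf s x") auto
qed

lemma sp_pshf:
  assumes "x \<in> CP q" "y \<in> CP q"
  shows "sp q (pshf s x) (pshf s y) = sp q x (y :: (nat \<Rightarrow> 'b) \<times> (nat \<Rightarrow> 'b))"
proof -
  define I where "I = supp2 x \<union> supp2 y"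
  have fI: "finite I" unfolding I_def using assms CP_fin by auto
  have "sp q (pshf s x) (pshf s y) = trq q (\<Sum>i\<in>(\<lambda>i. i + s) ` I. snd (pshf s x) i * fst (pshf s y) i - snd (pshf s y) i * fst (pshf s x) i)"
    by (rule sp_I) (use fI in \<open>auto simp: I_def supp2_pshf\<close>)
  also have "\<dots> = trq q (\<Sum>i\<in>I. snd x i * fst y i - snd y i * fst x i)"
    by (subst sum.reindex) (auto simp: inj_on_def pshf_def shf_at)
  also have "\<dots> = sp q x y" by (rule sp_I[symmetric]) (use fI in \<open>auto simp: I_def\<close>)
  finally show ?thesis .
qed

lemma pshift_carrier: "(E :: 'b pauli) \<in> carrier (pauli_group q) \<Longrightarrow> pshift s E \<in> carrier (pauli_group q)"
  unfolding carrier_P snd_pshift fst_pshift using CP_pshf by auto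

lemma phase_comm: "pauli_mult q (c, \<lambda>_. 0, \<lambda>_. 0) g = pauli_mult q g (c, \<lambda>_. 0, \<lambda>_. (0::'b))"
  by (cases g) (simp add: pauli_mult_simp add.commute)

lemma test_X: "x \<in> Fq q \<Longrightarrow> (0, dlt i x, \<lambda>_. 0) \<in> carrier (pauli_group q :: 'b pauli monoid)"
  unfolding carrier_P CP_def dlt_def
  by (auto intro: finite_subset[of _ "{i}"])
lemma test_Z: "x \<in> Fq q \<Longrightarrow> (0, \<lambda>_. 0, dlt i x) \<in> carrier (pauli_group q :: 'b pauli monoid)"
  unfolding carrier_P CP_def dlt_def
  by (auto intro: finite_subset[of _ "{i}"])
lemma supp2_test: "supp2 (dlt i x, \<lambda>_. 0 :: 'b) \<subseteq> {i}" "supp2 (\<lambda>_. 0 :: 'b, dlt i x) \<subseteq> {i}"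
  unfolding supp2_def dlt_def by auto

lemma center_test:
  assumes z: "(z :: 'b pauli) \<in> carrier (pauli_group q)"
    and cx: "\<And>x. x \<in> Fq q \<Longrightarrow> pauli_mult q z (0, dlt i x, \<lambda>_. 0) = pauli_mult q (0, dlt i x, \<lambda>_. 0) z"
    and cz: "\<And>x. x \<in> Fq q \<Longrightarrow> pauli_mult q z (0, \<lambda>_. 0, dlt i x) = pauli_mult q (0, \<lambda>_. 0, dlt i x) z"
  shows "fst (snd z) i = 0 \<and> snd (snd z) i = 0"
proof -
  obtain c a b where zz: "z = (c, a, b)" by (cases z) auto
  have zc: "(a, b) \<in> CP q" using z unfolding zz carrier_P by simp
  define I where "I = insert i (supp2 (a, b))"
  have fI: "finite I" unfolding I_def using CP_fin[OF zc] by simp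
  have b0: "b i = 0"
  proof (rule ccontr)
    assume bi: "b i \<noteq> 0"
    obtain x where x: "x \<in> Fq q" "trq q (b i * x) \<noteq> 0" using trq_nondeg[of "b i"] bi CP_Fq[OF zc] by auto
    have s0: "sp q (a, b) (dlt i x, \<lambda>_. 0) = 0" using cx[OF x(1)] unfolding sp_comm zz by simp
    have sI: "supp2 (dlt i x, \<lambda>_. 0) \<subseteq> I" using supp2_test(1)[of i x] unfolding I_def by blast
    moreover have "sp q (a, b) (dlt i x, \<lambda>_. 0) = trq q (\<Sum>j\<in>I. b j * dlt i x j)"
      by (subst sp_I[OF fI]) (use sI in \<open>auto simp: I_def\<close>)
    moreover have "(\<Sum>j\<in>I. b j * dlt i x j) = b i * x"
      unfolding dlt_def using fI by (simp add: I_def if_distrib cong: if_cong)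
    ultimately show False using x s0 by simp
  qed
  have a0: "a i = 0"
  proof (rule ccontr)
    assume ai: "a i \<noteq> 0"
    obtain x where x: "x \<in> Fq q" "trq q (a i * x) \<noteq> 0" using trq_nondeg[of "a i"] ai CP_Fq[OF zc] by auto
    have s0: "sp q (a, b) (\<lambda>_. 0, dlt i x) = 0" using cz[OF x(1)] unfolding sp_comm zz by simp
    have sI: "supp2 (\<lambda>_. 0, dlt i x) \<subseteq> I" using supp2_test(2)[of i x] unfolding I_def by blast
    moreover have "sp q (a, b) (\<lambda>_. 0, dlt i x) = trq q (\<Sum>j\<in>I. - (dlt i x j * a j))"
      by (subst sp_I[OF fI]) (use sI in \<open>auto simp: I_def\<close>)
    moreover have "(\<Sum>j\<in>I. - (dlt i x j * a j)) = - (a i * x)"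
    proof -
      have "(\<Sum>j\<in>I. - (dlt i x j * a j)) = (\<Sum>j\<in>I. if j = i then - (a i * x) else 0)"
        by (rule sum.cong) (auto simp: dlt_def mult.commute)
      also have "\<dots> = - (a i * x)" using fI by (simp add: I_def)
      finally show ?thesis .
    qed
    ultimately show False using x s0 by (simp add: trq_neg)
  qed
  show ?thesis using a0 b0 zz by simp
qed

lemma center_P: "(z :: 'b pauli) \<in> center_of (pauli_group q) \<Longrightarrow> snd z = (\<lambda>_. 0, \<lambda>_. 0)"
proof -
  assume z: "z \<in> center_of (pauli_group q)"
  have zc: "z \<in> carrier (pauli_group q)" using z unfolding center_of_def by simp
  have "fst (snd z) i = 0 \<and> snd (snd z) i = 0" for i
    by (rule center_test[OF zc]) (use z test_X test_Z in \<open>auto simp: center_of_def\<close>)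
  thus ?thesis by (cases z) (auto simp: fun_eq_iff)
qed

lemma phase_center_P: "c \<in> Fp \<Longrightarrow> (c, \<lambda>_. 0, \<lambda>_. 0 :: 'b) \<in> center_of (pauli_group q)"
  unfolding center_of_def using phase_comm CP_0 by (auto simp: carrier_P)

lemma center_W: "center_of (pauli_win q N) = (\<lambda>c. (c, \<lambda>_. 0, \<lambda>_. 0 :: 'b)) ` Fp"
proof
  show "center_of (pauli_win q N) \<subseteq> (\<lambda>c. (c, \<lambda>_. 0, \<lambda>_. 0 :: 'b)) ` Fp"
  proof
    fix z :: "'b pauli" assume z: "z \<in> center_of (pauli_win q N)"
    have zW: "z \<in> carrier (pauli_win q N)" using z unfolding center_of_def by simp
    have zc: "z \<in> carrier (pauli_group q)" using zW carrier_W0 by blast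
    have "fst (snd z) i = 0 \<and> snd (snd z) i = 0" for i
    proof (cases "i < N")
      case True
      have tX: "(0, dlt i x, \<lambda>_. 0) \<in> carrier (pauli_win q N)" if "x \<in> Fq q" for x :: 'b
      proof -
        have "supp2 (dlt i x, \<lambda>_. 0) \<subseteq> {..<N}" using supp2_test(1)[of i x] True by auto
        thus ?thesis unfolding carrier_W0 using test_X[OF that] by auto
      qed
      have tZ: "(0, \<lambda>_. 0, dlt i x) \<in> carrier (pauli_win q N)" if "x \<in> Fq q" for x :: 'b
      proof -
        have "supp2 (\<lambda>_. 0, dlt i x) \<subseteq> {..<N}" using supp2_test(2)[of i x] True by auto
        thus ?thesis unfolding carrier_W0 using test_Z[OF that] by auto
      qed
      show ?thesis by (rule center_test[OF zc]) (use z tX tZ in \<open>auto simp: center_of_def\<close>)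
    next
      case False
      have "supp2 (snd z) \<subseteq> {..<N}" using zW unfolding carrier_W0 by blast
      then have "i \<notin> supp2 (snd z)" using False by auto
      then show ?thesis unfolding supp2_def by auto
    qed
    moreover have "fst z \<in> Fp" using zc unfolding carrier_P by blast
    ultimately show "z \<in> (\<lambda>c. (c, \<lambda>_. 0, \<lambda>_. 0 :: 'b)) ` Fp"
      by (intro rev_image_eqI[of "fst z"]) (auto simp: fun_eq_iff prod_eq_iff)
  qed
  show "(\<lambda>c. (c, \<lambda>_. 0, \<lambda>_. 0 :: 'b)) ` Fp \<subseteq> center_of (pauli_win q N)"
    unfolding center_of_def using phase_comm CP_0 by (auto simp: carrier_W supp2_def)
qed

lemma coset_W:
  assumes "fst (s :: 'b pauli) \<in> Fp"
  shows "center_of (pauli_win q N) #>\<^bsub>pauli_win q N\<^esub> s = (\<lambda>c. (c, fst (snd s), snd (snd s))) ` Fp"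
proof -
  obtain cs a b where ss: "s = (cs, a, b)" by (cases s) auto
  have "center_of (pauli_win q N) #>\<^bsub>pauli_win q N\<^esub> s = (\<lambda>c. (c + cs, a, b)) ` Fp"
    unfolding center_W r_coset_def ss by (auto simp: pauli_mult_simp)
  also have "\<dots> = (\<lambda>c. (c, a, b)) ` (Fp :: 'b set)"
  proof
    show "(\<lambda>c. (c + cs, a, b)) ` Fp \<subseteq> (\<lambda>c. (c, a, b)) ` (Fp :: 'b set)" using assms ss by auto
    show "(\<lambda>c. (c, a, b)) ` Fp \<subseteq> (\<lambda>c. (c + cs, a, b)) ` (Fp :: 'b set)"
    proof
      fix y assume "y \<in> (\<lambda>c. (c, a, b)) ` (Fp :: 'b set)"
      then obtain c where c: "c \<in> Fp" "y = (c, a, b)" by auto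
      show "y \<in> (\<lambda>c. (c + cs, a, b)) ` Fp"
        by (rule rev_image_eqI[of "c - cs"]) (use c assms ss in auto)
    qed
  qed
  finally show ?thesis unfolding ss by simp
qed

lemma card_cosets:
  assumes "X \<subseteq> carrier (pauli_win q N :: 'b pauli monoid)"
  shows "card ((\<lambda>s. center_of (pauli_win q N) #>\<^bsub>pauli_win q N\<^esub> s) ` X) = card (snd ` X)"
proof -
  define F where "F p = (\<lambda>c. (c, fst p, snd p)) ` (Fp :: 'b set)" for p :: "(nat \<Rightarrow> 'b) \<times> (nat \<Rightarrow> 'b)"
  have "(\<lambda>s. center_of (pauli_win q N) #>\<^bsub>pauli_win q N\<^esub> s) ` X = F ` (snd ` X)"
  proof -
    have "\<And>s. s \<in> X \<Longrightarrow> center_of (pauli_win q N) #>\<^bsub>pauli_win q N\<^esub> s = F (snd s)"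
      unfolding F_def using assms by (intro coset_W) (auto simp: carrier_W)
    thus ?thesis by (auto simp: image_image)
  qed
  moreover have "inj_on F (snd ` X)"
  proof (rule inj_onI)
    fix p p' assume "F p = F p'"
    moreover have "(0, fst p, snd p) \<in> F p" unfolding F_def by auto
    ultimately have "(0, fst p, snd p) \<in> F p'" by simp
    thus "p = p'" unfolding F_def by (auto simp: prod_eq_iff)
  qed
  ultimately show ?thesis by (simp add: card_image)
qed

end


definition tp :: "nat \<Rightarrow> 'b::field \<Rightarrow> (nat \<Rightarrow> 'b) \<times> (nat \<Rightarrow> 'b) \<Rightarrow> nat \<Rightarrow> 'b" where
  "tp q \<beta> x = (\<lambda>i. \<beta> * fst x i + \<beta> ^ q * snd x i)"

lemma tau_tp: "tau q \<beta> E = tp q \<beta> (snd E)"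
  unfolding tau_def tp_def by (cases E) auto

locale ffnb = ffq q \<beta> for q and \<beta> :: "'b::{finite,field}" +
  assumes nb: "normal_basis q \<beta>"
begin

lemma nb_inj:
  assumes "a \<in> Fq q" "b \<in> Fq q" "a' \<in> Fq q" "b' \<in> Fq q" "\<beta> * a + \<beta> ^ q * b = \<beta> * a' + \<beta> ^ q * b'"
  shows "a = a' \<and> b = b'"
proof -
  have "(a - a') * \<beta> + (b - b') * \<beta> ^ q = 0" using assms(5) by (simp add: algebra_simps)
  hence "a - a' = 0 \<and> b - b' = 0" using nb assms unfolding normal_basis_def by (meson Fq_diff)
  thus ?thesis by simp
qed

lemma nb_zero:
  assumes ab: "a \<in> Fq q" "b \<in> Fq q"
  shows "\<beta> * a + \<beta> ^ q * b = 0 \<longleftrightarrow> a = 0 \<and> b = 0"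
proof
  assume "\<beta> * a + \<beta> ^ q * b = 0"
  then have "\<beta> * a + \<beta> ^ q * b = \<beta> * 0 + \<beta> ^ q * 0" by (simp only: mult_zero_right add_0)
  then show "a = 0 \<and> b = 0" using nb_inj[OF ab Fq_0 Fq_0] by blast
next
  assume "a = 0 \<and> b = 0" then show "\<beta> * a + \<beta> ^ q * b = 0" by simp
qed

lemma tp_inj: assumes "x \<in> CP q" "y \<in> CP q" "tp q \<beta> x = tp q \<beta> y" shows "x = y"
proof -
  have "fst x i = fst y i \<and> snd x i = snd y i" for i
    using nb_inj[of "fst x i" "snd x i" "fst y i" "snd y i"] CP_Fq[OF assms(1)] CP_Fq[OF assms(2)]
      fun_cong[OF assms(3), of i] unfolding tp_def by auto
  thus ?thesis by (simp add: prod_eq_iff fun_eq_iff)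
qed

lemma supp_tp: "x \<in> CP q \<Longrightarrow> {i. tp q \<beta> x i \<noteq> 0} = supp2 x"
  unfolding tp_def supp2_def using nb_zero CP_Fq by blast

lemma nb_surj: "\<exists>a b. a \<in> Fq q \<and> b \<in> Fq q \<and> v = \<beta> * a + \<beta> ^ q * b"
proof -
  define f where "f = (\<lambda>(a, b). \<beta> * a + \<beta> ^ q * b)"
  have inj: "inj_on f (Fq q \<times> Fq q)"
  proof (rule inj_onI)
    fix p p' assume p: "p \<in> Fq q \<times> Fq q" and p': "p' \<in> Fq q \<times> Fq q" and e: "f p = f p'"
    obtain a b a' b' where pp: "p = (a, b)" "p' = (a', b')" by (cases p; cases p') auto
    show "p = p'" using nb_inj[of a b a' b'] p p' e unfolding pp f_def by simp
  qed
  have "card (UNIV :: 'b set) = q * q" using cardq by (simp add: power2_eq_square)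
  also have "\<dots> \<le> card (Fq q :: 'b set) * card (Fq q :: 'b set)" using card_Fq by (simp add: mult_le_mono)
  also have "\<dots> = card (f ` (Fq q \<times> Fq q))" using card_image[OF inj] by (simp add: card_cartesian_product)
  finally have "card (UNIV :: 'b set) \<le> card (f ` (Fq q \<times> Fq q))" .
  hence "f ` (Fq q \<times> Fq q) = UNIV"
    by (intro card_seteq[OF finite_UNIV subset_UNIV])
  hence "v \<in> f ` (Fq q \<times> Fq q)" by simp
  thus ?thesis unfolding f_def by auto
qed

definition "gam = \<beta> * \<beta> - \<beta> ^ q * \<beta> ^ q"

lemma gam_nz: "gam \<noteq> 0"
proof -
  have m1: "(- 1 :: 'b) \<in> Fq q" using Fq_neg[OF Fq_1] .
  have "\<beta> - \<beta> ^ q \<noteq> 0"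
    using nb m1 unfolding normal_basis_def by (metis Fq_1 add_uminus_conv_diff mult_1 mult_minus_left one_neq_zero)
  moreover have "\<beta> + \<beta> ^ q \<noteq> 0"
    using nb unfolding normal_basis_def by (metis Fq_1 mult_1 one_neq_zero)
  moreover have "gam = (\<beta> - \<beta> ^ q) * (\<beta> + \<beta> ^ q)" unfolding gam_def by (simp add: algebra_simps)
  ultimately show ?thesis by simp
qed

lemma gam_q: "gam ^ q = - gam"
  unfolding gam_def q_diff power_mult_distrib pow_qq by simp

lemma key_id:
  assumes "a \<in> Fq q" "b \<in> Fq q" "a' \<in> Fq q" "b' \<in> Fq q"
  shows "(\<beta> * a + \<beta> ^ q * b) * (\<beta> * a' + \<beta> ^ q * b') ^ q - (\<beta> * a + \<beta> ^ q * b) ^ q * (\<beta> * a' + \<beta> ^ q * b')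
     = gam * (a * b' - b * a')"
proof -
  have aq: "a ^ q = a" "b ^ q = b" "a' ^ q = a'" "b' ^ q = b'" using assms unfolding Fq_def by auto
  have v: "(\<beta> * a' + \<beta> ^ q * b') ^ q = \<beta> ^ q * a' + \<beta> * b'"
    unfolding q_add power_mult_distrib pow_qq aq ..
  have u: "(\<beta> * a + \<beta> ^ q * b) ^ q = \<beta> ^ q * a + \<beta> * b"
    unfolding q_add power_mult_distrib pow_qq aq ..
  show ?thesis unfolding u v gam_def by (simp add: algebra_simps)
qed

lemma herm_I:
  assumes "finite I" "{i. (u :: nat \<Rightarrow> 'b) i \<noteq> 0} \<subseteq> I"
  shows "herm q u v = (\<Sum>i\<in>I. u i * v i ^ q)"
  unfolding herm_def by (rule sum_supp_I[OF assms])

lemma sp_herm: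
  assumes x: "x \<in> CP q" and y: "y \<in> CP q"
  shows "sp q x y = - trq q (herm q (tp q \<beta> x) (tp q \<beta> y) / gam + (herm q (tp q \<beta> x) (tp q \<beta> y) / gam) ^ q)"
proof -
  define I where "I = supp2 x \<union> supp2 y"
  have fI: "finite I" unfolding I_def using x y CP_fin by auto
  define u where "u = tp q \<beta> x"
  define v where "v = tp q \<beta> y"
  define h where "h = herm q u v"
  have hI: "h = (\<Sum>i\<in>I. u i * v i ^ q)" unfolding h_def
    by (rule herm_I[OF fI]) (use supp_tp[OF x] in \<open>auto simp: u_def I_def\<close>)
  have hq: "h ^ q = (\<Sum>i\<in>I. u i ^ q * v i)"
    unfolding hI q_sum power_mult_distrib pow_qq ..
  have "(\<Sum>i\<in>I. snd x i * fst y i - snd y i * fst x i) = - (\<Sum>i\<in>I. fst x i * snd y i - snd x i * fst y i)"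
    by (simp add: sum_negf[symmetric] algebra_simps)
  also have "(\<Sum>i\<in>I. fst x i * snd y i - snd x i * fst y i) = (\<Sum>i\<in>I. (u i * v i ^ q - u i ^ q * v i) / gam)"
  proof (rule sum.cong[OF refl])
    fix i
    show "fst x i * snd y i - snd x i * fst y i = (u i * v i ^ q - u i ^ q * v i) / gam"
    proof -
      have "u i * v i ^ q - u i ^ q * v i = gam * (fst x i * snd y i - snd x i * fst y i)"
        unfolding u_def v_def tp_def using key_id[of "fst x i" "snd x i" "fst y i" "snd y i"] CP_Fq[OF x] CP_Fq[OF y]
        by simp
      thus ?thesis using gam_nz by simp
    qed
  qed
  also have "\<dots> = ((\<Sum>i\<in>I. u i * v i ^ q) - (\<Sum>i\<in>I. u i ^ q * v i)) / gam"
    by (simp add: diff_divide_distrib sum_divide_distrib sum_subtractf)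
  also have "\<dots> = (h - h ^ q) / gam" by (simp only: hI[symmetric] hq[symmetric])
  also have "\<dots> = h / gam + (h / gam) ^ q" by (simp add: power_divide gam_q diff_divide_distrib)
  finally have "(\<Sum>i\<in>I. snd x i * fst y i - snd y i * fst x i) = - (h / gam + (h / gam) ^ q)" .
  moreover have "sp q x y = trq q (\<Sum>i\<in>I. snd x i * fst y i - snd y i * fst x i)"
    by (rule sp_I[OF fI]) (auto simp: I_def)
  ultimately have "sp q x y = trq q (- (h / gam + (h / gam) ^ q))" by (simp only:)
  thus ?thesis unfolding h_def u_def v_def by (simp only: trq_neg)
qed

lemma herm_smult:
  assumes "finite {i. (u :: nat \<Rightarrow> 'b) i \<noteq> 0}"
  shows "herm q (\<lambda>i. c * u i) v = c * herm q u (v :: nat \<Rightarrow> 'b)"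
proof -
  have "herm q (\<lambda>i. c * u i) v = (\<Sum>i\<in>{i. u i \<noteq> 0}. c * u i * v i ^ q)"
    by (rule herm_I) (use assms in auto)
  also have "\<dots> = c * herm q u v" unfolding herm_def by (simp add: sum_distrib_left mult.assoc)
  finally show ?thesis .
qed

lemma sp_of_herm:
  assumes "x \<in> CP q" "y \<in> CP q" "herm q (tp q \<beta> x) (tp q \<beta> y) = 0"
  shows "sp q x y = 0"
  using sp_herm[OF assms(1,2)] assms(3) q_ge2 by (simp add: zero_power)

lemma herm_of_sp:
  assumes x: "x \<in> CP q" and y: "y \<in> CP q"
    and H: "\<And>c. \<exists>x' \<in> CP q. tp q \<beta> x' = (\<lambda>i. c * tp q \<beta> x i) \<and> sp q x' y = 0"
  shows "herm q (tp q \<beta> x) (tp q \<beta> y) = 0"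
proof (rule ccontr)
  define h where "h = herm q (tp q \<beta> x) (tp q \<beta> y)"
  assume "herm q (tp q \<beta> x) (tp q \<beta> y) \<noteq> 0"
  hence h0: "h \<noteq> 0" unfolding h_def .
  obtain z :: 'b where z: "trq q (z + z ^ q) \<noteq> 0" using trq_abs by blast
  define c where "c = z * gam / h"
  obtain x' where x': "x' \<in> CP q" "tp q \<beta> x' = (\<lambda>i. c * tp q \<beta> x i)" "sp q x' y = 0" using H by blast
  have fin: "finite {i. tp q \<beta> x i \<noteq> 0}" using supp_tp[OF x] CP_fin[OF x] by simp
  have "herm q (tp q \<beta> x') (tp q \<beta> y) = c * h" unfolding x'(2) h_def by (rule herm_smult[OF fin])
  hence "c * h / gam = z" unfolding c_def using h0 gam_nz by simp
  hence "sp q x' y = - trq q (z + z ^ q)" using sp_herm[OF x'(1) y] \<open>herm q (tp q \<beta> x') (tp q \<beta> y) = c * h\<close> by simp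
  thus False using x'(3) z by simp
qed

end


locale stabctx = ffnb q \<beta> for q and \<beta> :: "'b::{finite,field}" +
  fixes n k m :: nat and S0 :: "'b pauli set"
  assumes npos: "0 < n" and csc: "conv_stab_code q n k m S0"
begin

definition "Gens = {pshift (t * n) M | t M. M \<in> S0}"

lemma S_eq: "stab q n S0 = generate (pauli_group q) Gens"
  unfolding stab_def Gens_def ..

lemma S0_sub: "subgroup S0 (pauli_win q (n + m))"
  using csc unfolding conv_stab_code_def by blast

lemma S0_W: "M \<in> S0 \<Longrightarrow> M \<in> carrier (pauli_win q (n + m))"
  using subgroup.subset[OF S0_sub] by blast

lemma S0_P: "M \<in> S0 \<Longrightarrow> M \<in> carrier (pauli_group q)"
  using S0_W carrier_W0 by blast

lemma S0_CP: "M \<in> S0 \<Longrightarrow> snd M \<in> CP q"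
  using S0_P carrier_P by blast

lemma S0_one: "(0, \<lambda>_. 0, \<lambda>_. 0) \<in> S0"
  using subgroup.one_closed[OF S0_sub] by simp

lemma S0_mult: "M \<in> S0 \<Longrightarrow> N \<in> S0 \<Longrightarrow> pauli_mult q M N \<in> S0"
  using subgroup.m_closed[OF S0_sub] by fastforce

lemma S0_inv: "M \<in> S0 \<Longrightarrow> pinv M \<in> S0"
  using subgroup.m_inv_closed[OF S0_sub] inv_W S0_W by metis

lemma S0_comm: "M \<in> S0 \<Longrightarrow> N \<in> S0 \<Longrightarrow> sp q (snd M) (snd N) = 0"
  using csc unfolding conv_stab_code_def sp_comm[symmetric] by blast

lemma S1: "t \<ge> 1 \<Longrightarrow> M \<in> S0 \<Longrightarrow> N \<in> S0 \<Longrightarrow> sp q (pshf (t * n) (snd M)) (snd N) = 0"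
proof -
  assume a: "t \<ge> 1" "M \<in> S0" "N \<in> S0"
  have "pauli_mult q (pshift (t * n) M) N = pauli_mult q N (pshift (t * n) M)"
    using csc a unfolding conv_stab_code_def by blast
  thus ?thesis unfolding sp_comm snd_pshift .
qed

lemma Gens_P: "Gens \<subseteq> carrier (pauli_group q)"
  unfolding Gens_def using S0_P pshift_carrier by blast

lemma sp_Gens_aux: "M \<in> S0 \<Longrightarrow> N \<in> S0 \<Longrightarrow> t2 \<le> t1 \<Longrightarrow>
    sp q (pshf (t1 * n) (snd M)) (pshf (t2 * n) (snd N)) = 0"
proof -
  assume MN: "M \<in> S0" "N \<in> S0" and t: "t2 \<le> t1"
  have "pshf (t1 * n) (snd M) = pshf (t2 * n) (pshf ((t1 - t2) * n) (snd M))"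
    using t by (simp add: pshf_add[symmetric] add_mult_distrib[symmetric])
  hence "sp q (pshf (t1 * n) (snd M)) (pshf (t2 * n) (snd N)) = sp q (pshf ((t1 - t2) * n) (snd M)) (snd N)"
    using sp_pshf CP_pshf S0_CP MN by simp
  also have "\<dots> = 0"
  proof (cases "t1 - t2 = 0")
    case True then show ?thesis using S0_comm MN by (simp add: pshf0)
  next
    case False then show ?thesis using S1 MN by simp
  qed
  finally show ?thesis .
qed

lemma sp_Gens: "g \<in> Gens \<Longrightarrow> h \<in> Gens \<Longrightarrow> sp q (snd g) (snd h) = 0"
proof -
  assume "g \<in> Gens" "h \<in> Gens"
  then obtain t1 M t2 N where g: "g = pshift (t1 * n) M" "M \<in> S0" and h: "h = pshift (t2 * n) N" "N \<in> S0"
    unfolding Gens_def by blast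
  show ?thesis
  proof (cases "t2 \<le> t1")
    case True then show ?thesis unfolding g h snd_pshift using sp_Gens_aux g h by simp
  next
    case False
    then have "sp q (snd h) (snd g) = 0" unfolding g h snd_pshift using sp_Gens_aux g h by simp
    then show ?thesis using sp_antisym[of q "snd g" "snd h"] by simp
  qed
qed

lemma S_P: "s \<in> stab q n S0 \<Longrightarrow> s \<in> carrier (pauli_group q)"
  using gen_closure[OF Gens_P, of UNIV] unfolding S_eq by blast

lemma S_CP: "s \<in> stab q n S0 \<Longrightarrow> snd s \<in> CP q"
  using S_P carrier_P by blast

lemma closed_sp:
  assumes y: "(y :: (nat \<Rightarrow> 'b) \<times> (nat \<Rightarrow> 'b)) \<in> CP q"
  shows "((\<lambda>_. 0), (\<lambda>_. 0)) \<in> {v \<in> CP q. sp q v y = 0}"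
    "\<And>u v. u \<in> {v \<in> CP q. sp q v y = 0} \<Longrightarrow> v \<in> {v \<in> CP q. sp q v y = 0} \<Longrightarrow> padd u v \<in> {v \<in> CP q. sp q v y = 0}"
    "\<And>u. u \<in> {v \<in> CP q. sp q v y = 0} \<Longrightarrow> pneg u \<in> {v \<in> CP q. sp q v y = 0}"
  using CP_0 sp_zero1 CP_add sp_add1[OF _ _ y] CP_neg sp_neg1 by auto

lemma S_comm: "s \<in> stab q n S0 \<Longrightarrow> s' \<in> stab q n S0 \<Longrightarrow> sp q (snd s) (snd s') = 0"
proof -
  have step1: "sp q (snd x) (snd h) = 0" if x: "x \<in> stab q n S0" and h: "h \<in> Gens" for x h
  proof -
    have hc: "snd h \<in> CP q" using Gens_P h carrier_P by blast
    have "snd x \<in> {v \<in> CP q. sp q v (snd h) = 0}"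
    proof (rule conjunct2[OF gen_closure[OF Gens_P closed_sp[OF hc]]])
      fix g assume g: "g \<in> Gens"
      show "snd g \<in> {v \<in> CP q. sp q v (snd h) = 0}" using sp_Gens[OF g h] Gens_P g carrier_P by blast
    next
      show "x \<in> generate (pauli_group q) Gens" using x S_eq by simp
    qed
    thus ?thesis by simp
  qed
  assume s: "s \<in> stab q n S0" and s': "s' \<in> stab q n S0"
  have sc: "snd s' \<in> CP q" using S_CP[OF s'] .
  have "snd s \<in> {v \<in> CP q. sp q v (snd s') = 0}"
  proof (rule conjunct2[OF gen_closure[OF Gens_P closed_sp[OF sc]]])
    fix h assume h: "h \<in> Gens"
    have "sp q (snd h) (snd s') = - sp q (snd s') (snd h)" by (rule sp_antisym)
    also have "\<dots> = 0" using step1[OF s' h] by simp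
    finally show "snd h \<in> {v \<in> CP q. sp q v (snd s') = 0}" using Gens_P h carrier_P by blast
  next
    show "s \<in> generate (pauli_group q) Gens" using s S_eq by simp
  qed
  thus ?thesis by simp
qed

lemma S_one: "(0, \<lambda>_. 0, \<lambda>_. 0) \<in> stab q n S0"
  unfolding S_eq using generate.one[of "pauli_group q" Gens] by simp

lemma S_mult: "s \<in> stab q n S0 \<Longrightarrow> s' \<in> stab q n S0 \<Longrightarrow> pauli_mult q s s' \<in> stab q n S0"
  unfolding S_eq using generate.eng[of _ "pauli_group q" Gens] by simp

lemma Gens_S: "g \<in> Gens \<Longrightarrow> g \<in> stab q n S0"
  unfolding S_eq by (rule generate.incl)

lemma sndS_closed:
  "((\<lambda>_. 0), (\<lambda>_. 0)) \<in> snd ` stab q n S0"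
  "\<And>u v. u \<in> snd ` stab q n S0 \<Longrightarrow> v \<in> snd ` stab q n S0 \<Longrightarrow> padd u v \<in> snd ` stab q n S0"
  "\<And>u. u \<in> snd ` stab q n S0 \<Longrightarrow> pneg u \<in> snd ` stab q n S0"
proof -
  show "((\<lambda>_. 0), (\<lambda>_. 0)) \<in> snd ` stab q n S0" using S_one by (intro rev_image_eqI) auto
  show "padd u v \<in> snd ` stab q n S0" if uv: "u \<in> snd ` stab q n S0" "v \<in> snd ` stab q n S0" for u v
  proof -
    obtain s s' where "s \<in> stab q n S0" "s' \<in> stab q n S0" "u = snd s" "v = snd s'" using uv by blast
    thus ?thesis using S_mult by (intro rev_image_eqI[of "pauli_mult q s s'"]) (auto simp: snd_pauli_mult)
  qed
  define V where "V = {v. v \<in> snd ` stab q n S0 \<and> pneg v \<in> snd ` stab q n S0}"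
  have pp: "pneg (pneg v) = v" for v :: "(nat \<Rightarrow> 'b) \<times> (nat \<Rightarrow> 'b)" unfolding pneg_def by simp
  have pa: "pneg (padd u v) = padd (pneg u) (pneg v)" for u v :: "(nat \<Rightarrow> 'b) \<times> (nat \<Rightarrow> 'b)"
    unfolding pneg_def padd_def by (simp add: algebra_simps)
  have p0: "pneg ((\<lambda>_. 0), (\<lambda>_. 0)) = ((\<lambda>_. 0), (\<lambda>_. 0 :: 'b))" unfolding pneg_def by simp
  have mult_snd: "padd u v \<in> snd ` stab q n S0" if uv: "u \<in> snd ` stab q n S0" "v \<in> snd ` stab q n S0" for u v
  proof -
    obtain s s' where "s \<in> stab q n S0" "s' \<in> stab q n S0" "u = snd s" "v = snd s'" using uv by blast
    thus ?thesis using S_mult by (intro rev_image_eqI[of "pauli_mult q s s'"]) (auto simp: snd_pauli_mult)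
  qed
  have "snd s \<in> V" if "s \<in> stab q n S0" for s
  proof (rule conjunct2[OF gen_closure[OF Gens_P, of V]])
    have z0: "((\<lambda>_. 0), (\<lambda>_. 0 :: 'b)) \<in> snd ` stab q n S0" using S_one by (intro rev_image_eqI) auto
    show "((\<lambda>_. 0), (\<lambda>_. 0)) \<in> V" unfolding V_def mem_Collect_eq p0 using z0 by blast
    show "padd x y \<in> V" if xy: "x \<in> V" "y \<in> V" for x y
    proof -
      have x: "x \<in> snd ` stab q n S0" "pneg x \<in> snd ` stab q n S0" using xy(1) unfolding V_def by simp_all
      have y: "y \<in> snd ` stab q n S0" "pneg y \<in> snd ` stab q n S0" using xy(2) unfolding V_def by simp_all
      show ?thesis unfolding V_def mem_Collect_eq pa using mult_snd[OF x(1) y(1)] mult_snd[OF x(2) y(2)] by (rule conjI)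
    qed
    show "pneg x \<in> V" if xV: "x \<in> V" for x
    proof -
      have x: "x \<in> snd ` stab q n S0" "pneg x \<in> snd ` stab q n S0" using xV unfolding V_def by simp_all
      show ?thesis unfolding V_def mem_Collect_eq pp using x by (intro conjI)
    qed
    show "snd h \<in> V" if h: "h \<in> Gens" for h
    proof -
      have "inv\<^bsub>pauli_group q\<^esub> h \<in> stab q n S0" unfolding S_eq by (rule generate.inv[OF h])
      moreover have "inv\<^bsub>pauli_group q\<^esub> h = pinv h" using inv_P Gens_P h by blast
      ultimately have "pinv h \<in> stab q n S0" by simp
      hence "pneg (snd h) \<in> snd ` stab q n S0" unfolding snd_pinv[symmetric] by blast
      thus ?thesis unfolding V_def using Gens_S[OF h] by blast
    qed
    show "s \<in> generate (pauli_group q) Gens" using that S_eq by simp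
  qed
  thus "pneg u \<in> snd ` stab q n S0" if "u \<in> snd ` stab q n S0" for u using that unfolding V_def by blast
qed

lemma stab_t_props: "stab_t q n S0 t \<subseteq> carrier (pauli_win q ((t + 1) * n + m)) \<and> snd ` stab_t q n S0 t \<subseteq> snd ` stab q n S0"
proof (induction t)
  case 0
  have "snd ` S0 \<subseteq> snd ` stab q n S0"
  proof
    fix v assume "v \<in> snd ` S0"
    then obtain M where "M \<in> S0" "v = snd M" by auto
    moreover have "pshift (0 * n) M \<in> Gens" unfolding Gens_def using \<open>M \<in> S0\<close> by blast
    ultimately have "M \<in> stab q n S0" using Gens_S by simp
    thus "v \<in> snd ` stab q n S0" using \<open>v = snd M\<close> by blast
  qed
  then show ?case using S0_W by auto
next
  case (Suc t)
  define N where "N = (Suc t + 1) * n + m"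
  define H where "H = stab_t q n S0 t \<union> pshift (Suc t * n) ` S0"
  have st: "stab_t q n S0 (Suc t) = generate (pauli_group q) H" unfolding H_def by simp
  have HP: "H \<subseteq> carrier (pauli_group q)" unfolding H_def using Suc.IH carrier_W0 S0_P pshift_carrier by blast
  define V where "V = {v \<in> snd ` stab q n S0. supp2 v \<subseteq> {..<N}}"
  have "x \<in> carrier (pauli_group q) \<and> snd x \<in> V" if x: "x \<in> stab_t q n S0 (Suc t)" for x
  proof (rule gen_closure[OF HP])
    show "((\<lambda>_. 0), (\<lambda>_. 0)) \<in> V" unfolding V_def using sndS_closed(1) by (auto simp: supp2_def)
    show "padd x y \<in> V" if "x \<in> V" "y \<in> V" for x y
      using that sndS_closed(2) supp2_padd[of x y] unfolding V_def by blast
    show "pneg x \<in> V" if "x \<in> V" for x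
      using that sndS_closed(3) supp2_pneg[of x] unfolding V_def by auto
    show "snd h \<in> V" if h: "h \<in> H" for h
    proof (cases "h \<in> stab_t q n S0 t")
      case True
      have "supp2 (snd h) \<subseteq> {..<(t + 1) * n + m}" using Suc.IH True carrier_W0 by blast
      moreover have "(t + 1) * n + m \<le> N" unfolding N_def by simp
      ultimately show ?thesis unfolding V_def using Suc.IH True by auto
    next
      case False
      then obtain M where M: "M \<in> S0" "h = pshift (Suc t * n) M" using h H_def by auto
      have "h \<in> Gens" unfolding Gens_def using M by blast
      hence "snd h \<in> snd ` stab q n S0" using Gens_S by blast
      moreover have "supp2 (snd M) \<subseteq> {..<n + m}" using S0_W[OF M(1)] carrier_W0 by blast
      hence "supp2 (snd h) \<subseteq> {..<N}" unfolding M(2) snd_pshift supp2_pshf N_def by auto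
      ultimately show ?thesis unfolding V_def by blast
    qed
    show "x \<in> generate (pauli_group q) H" using x st by simp
  qed
  hence "x \<in> carrier (pauli_win q N) \<and> snd x \<in> snd ` stab q n S0" if "x \<in> stab_t q n S0 (Suc t)" for x
    using that unfolding V_def carrier_W0 by blast
  thus ?case unfolding N_def by blast
qed

lemma trunc_S0: "s \<in> stab q n S0 \<Longrightarrow> \<exists>M\<in>S0. \<forall>i<n. fst (snd s) i = fst (snd M) i \<and> snd (snd s) i = snd (snd M) i"
proof -
  define V where "V = {v. \<exists>M\<in>S0. \<forall>i<n. fst v i = fst (snd M) i \<and> snd v i = snd (snd M) i}"
  assume s: "s \<in> stab q n S0"
  have "snd s \<in> V"
  proof (rule conjunct2[OF gen_closure[OF Gens_P, of V]])
    show "((\<lambda>_. 0), (\<lambda>_. 0)) \<in> V" unfolding V_def using S0_one by force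
    show "padd x y \<in> V" if xy: "x \<in> V" "y \<in> V" for x y
    proof -
      obtain M N where "M \<in> S0" "N \<in> S0" "\<forall>i<n. fst x i = fst (snd M) i \<and> snd x i = snd (snd M) i"
        "\<forall>i<n. fst y i = fst (snd N) i \<and> snd y i = snd (snd N) i" using xy unfolding V_def by blast
      thus ?thesis unfolding V_def using S0_mult
        by (intro CollectI bexI[of _ "pauli_mult q M N"]) (auto simp: snd_pauli_mult padd_def)
    qed
    show "pneg x \<in> V" if xV: "x \<in> V" for x
    proof -
      obtain M where "M \<in> S0" "\<forall>i<n. fst x i = fst (snd M) i \<and> snd x i = snd (snd M) i"
        using xV unfolding V_def by blast
      thus ?thesis unfolding V_def using S0_inv
        by (intro CollectI bexI[of _ "pinv M"]) (auto simp: snd_pinv pneg_def)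
    qed
    show "snd h \<in> V" if h: "h \<in> Gens" for h
    proof -
      obtain t M where M: "M \<in> S0" "h = pshift (t * n) M" using h unfolding Gens_def by blast
      show ?thesis
      proof (cases "t = 0")
        case True then show ?thesis unfolding V_def M using M(1) by auto
      next
        case False
        then have nt: "n \<le> t * n" by simp
        have nt2: "\<And>i. t * n \<le> i \<Longrightarrow> n \<le> i" using nt by linarith
        show ?thesis unfolding V_def M snd_pshift pshf_def shf_def using S0_one
          by (intro CollectI bexI[of _ "(0, \<lambda>_. 0, \<lambda>_. 0)"]) (auto dest: nt2)
      qed
    qed
    show "s \<in> generate (pauli_group q) Gens" using s S_eq by simp
  qed
  thus ?thesis unfolding V_def by blast
qed

lemma card_stab_t: "card (snd ` stab_t q n S0 t) = q ^ ((t + 1) * (n - k))"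
proof -
  have "card ((\<lambda>s. center_of (pauli_win q ((t + 1) * n + m)) #>\<^bsub>pauli_win q ((t + 1) * n + m)\<^esub> s)
                  ` stab_t q n S0 t) = q ^ ((t + 1) * (n - k))"
    using csc unfolding conv_stab_code_def by blast
  thus ?thesis using card_cosets stab_t_props by metis
qed

lemma card_S0: "card (snd ` S0) = q ^ (n - k)"
  using card_stab_t[of 0] by simp

end


definition trn :: "nat \<Rightarrow> (nat \<Rightarrow> 'a::zero) \<Rightarrow> nat \<Rightarrow> 'a" where
  "trn L v = (\<lambda>i. if i < L then v i else 0)"

lemma mv_low:
  fixes M :: "'a::field poly mat"
  assumes M: "M \<in> carrier_mat r c" and w: "w \<in> carrier_vec c" and w': "w' \<in> carrier_vec c"
    and agree: "\<And>j e. j < c \<Longrightarrow> e < d \<Longrightarrow> coeff (w $ j) e = coeff (w' $ j) e"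
    and i: "i < r" and e: "e < d"
  shows "coeff ((M *\<^sub>v w) $ i) e = coeff ((M *\<^sub>v w') $ i) e"
proof -
  have m: "(M *\<^sub>v x) $ i = (\<Sum>j\<in>{0..<c}. M $$ (i, j) * x $ j)" if "x \<in> carrier_vec c" for x
    using M that i by (simp add: scalar_prod_def)
  show ?thesis unfolding m[OF w] m[OF w'] coeff_sum coeff_mult
    by (intro sum.cong refl) (use agree e in auto)
qed

lemma sigma_low:
  assumes n: "0 < n" and w: "w \<in> carrier_vec n" and w': "w' \<in> carrier_vec n"
    and agree: "\<And>j e. j < n \<Longrightarrow> e < d \<Longrightarrow> coeff (w $ j) e = coeff (w' $ j) e"
    and j: "j < d * n"
  shows "sigma n w j = sigma n w' j"
proof -
  have "j div n < d" using j n by (simp add: div_less_iff_less_mult)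
  thus ?thesis unfolding sigma_def using agree n by simp
qed

lemma sigma_coeff:
  assumes "0 < n" "r < n"
  shows "coeff (w $ r) e = sigma n w (e * n + r)"
  unfolding sigma_def using assms by simp

lemma sigma_surj:
  assumes n: "0 < n" and fin: "finite {i. v i \<noteq> 0}"
  shows "\<exists>w\<in>carrier_vec n. sigma n w = (v :: nat \<Rightarrow> 'a::zero)"
proof -
  obtain B where B: "{i. v i \<noteq> 0} \<subseteq> {..<B}" using finite_nat_bounded[OF fin] by blast
  define w where "w = vec n (\<lambda>r. Poly (map (\<lambda>e. v (e * n + r)) [0..<B]))"
  have "sigma n w j = v j" for j
  proof -
    have r: "j mod n < n" using n by simp
    have "sigma n w j = coeff (Poly (map (\<lambda>e. v (e * n + j mod n)) [0..<B])) (j div n)"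
      unfolding sigma_def w_def using r by simp
    also have "\<dots> = (if j div n < B then v (j div n * n + j mod n) else 0)"
      by (simp add: nth_default_def)
    also have "\<dots> = v j"
    proof (cases "j div n < B")
      case False
      then have "B \<le> j div n" by simp
      also have "j div n \<le> j" by simp
      finally have "B \<le> j" .
      hence "j \<notin> {..<B}" by simp
      hence "v j = 0" using B by blast
      then show ?thesis using False by simp
    qed simp
    finally show ?thesis .
  qed
  thus ?thesis unfolding w_def by (intro bexI[of _ w]) (auto simp: w_def fun_eq_iff)
qed

lemma poly_trunc_coeff: "e < d \<Longrightarrow> coeff (Poly (map f [0..<d])) e = f e"
  by (simp add: nth_default_def)

lemma rank_ineqs:
  fixes G H :: "'a::{finite,field} poly mat" and T :: "(nat \<Rightarrow> 'a) set"
  assumes G: "G \<in> carrier_mat k' n" and H: "H \<in> carrier_mat n k'" and GH: "G * H = 1\<^sub>m k'" and n: "0 < n"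
    and R1: "\<And>u. u \<in> carrier_vec k' \<Longrightarrow> sigma n (transpose_mat G *\<^sub>v u) \<in> T"
    and R2: "\<And>v. v \<in> T \<Longrightarrow> \<exists>u \<in> carrier_vec k'. v = sigma n (transpose_mat G *\<^sub>v u)"
  shows "\<exists>X. X \<subseteq> trn n ` T \<and> card X = card (UNIV :: 'a set) ^ k'"
    and "finite (trn (d * n) ` T) \<and> card (trn (d * n) ` T) \<le> (card (UNIV :: 'a set) ^ d) ^ k'"
proof -
  define GT where "GT = transpose_mat G"
  define HT where "HT = transpose_mat H"
  have GT: "GT \<in> carrier_mat n k'" unfolding GT_def using G by simp
  have HT: "HT \<in> carrier_mat k' n" unfolding HT_def using H by simp
  have HG: "HT * GT = 1\<^sub>m k'" unfolding HT_def GT_def using transpose_mult[OF G H] GH by simp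
  have inv: "HT *\<^sub>v (GT *\<^sub>v u) = u" if "u \<in> carrier_vec k'" for u
    using assoc_mult_mat_vec[OF HT GT that] HG that by simp
  define F1 where "F1 = ({..<k'} \<rightarrow>\<^sub>E (UNIV :: 'a set))"
  define cv where "cv f = vec k' (\<lambda>i. [:f i:])" for f :: "nat \<Rightarrow> 'a"
  define \<phi> where "\<phi> f = trn n (sigma n (GT *\<^sub>v cv f))" for f
  have cvc: "cv f \<in> carrier_vec k'" for f unfolding cv_def by simp
  have "inj_on \<phi> F1"
  proof (rule inj_onI)
    fix f f' assume f: "f \<in> F1" and f': "f' \<in> F1" and e: "\<phi> f = \<phi> f'"
    have wc: "GT *\<^sub>v cv f \<in> carrier_vec n" "GT *\<^sub>v cv f' \<in> carrier_vec n" using GT cvc by auto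
    have ag: "coeff ((GT *\<^sub>v cv f) $ j) e = coeff ((GT *\<^sub>v cv f') $ j) e" if "j < n" "e < (1::nat)" for j e
    proof -
      have "sigma n (GT *\<^sub>v cv f) (0 * n + j) = sigma n (GT *\<^sub>v cv f') (0 * n + j)"
        using fun_cong[OF e, of j] that unfolding \<phi>_def trn_def by simp
      moreover have "e = 0" using that by simp
      ultimately show ?thesis using sigma_coeff[OF n that(1), of "GT *\<^sub>v cv f" 0] sigma_coeff[OF n that(1), of "GT *\<^sub>v cv f'" 0]
        by simp
    qed
    have "f i = f' i" if i: "i < k'" for i
    proof -
      have "coeff ((HT *\<^sub>v (GT *\<^sub>v cv f)) $ i) 0 = coeff ((HT *\<^sub>v (GT *\<^sub>v cv f')) $ i) 0"
        by (rule mv_low[OF HT wc, where d=1]) (use ag i in auto)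
      thus ?thesis unfolding inv[OF cvc] using i by (simp add: cv_def)
    qed
    thus "f = f'" using f f' unfolding F1_def by (auto intro: PiE_ext)
  qed
  moreover have "card F1 = card (UNIV :: 'a set) ^ k'" unfolding F1_def by (simp add: card_PiE)
  moreover have "\<phi> ` F1 \<subseteq> trn n ` T" unfolding \<phi>_def GT_def using R1 cvc by blast
  ultimately show "\<exists>X. X \<subseteq> trn n ` T \<and> card X = card (UNIV :: 'a set) ^ k'"
    by (intro exI[of _ "\<phi> ` F1"]) (simp add: card_image)
  define Fd where "Fd = ({..<k'} \<rightarrow>\<^sub>E ({..<d} \<rightarrow>\<^sub>E (UNIV :: 'a set)))"
  define pv where "pv f = vec k' (\<lambda>i. Poly (map (f i) [0..<d]))" for f :: "nat \<Rightarrow> nat \<Rightarrow> 'a"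
  define \<psi> where "\<psi> f = trn (d * n) (sigma n (GT *\<^sub>v pv f))" for f
  have "trn (d * n) ` T \<subseteq> \<psi> ` Fd"
  proof
    fix y assume "y \<in> trn (d * n) ` T"
    then obtain v where v: "v \<in> T" "y = trn (d * n) v" by auto
    obtain u where u: "u \<in> carrier_vec k'" "v = sigma n (GT *\<^sub>v u)" using R2[OF v(1)] GT_def by auto
    define f where "f = restrict (\<lambda>i. restrict (\<lambda>e. coeff (u $ i) e) {..<d}) {..<k'}"
    have fF: "f \<in> Fd" unfolding Fd_def f_def by auto
    have pvc: "pv f \<in> carrier_vec k'" unfolding pv_def by simp
    have ag: "coeff (u $ i) e = coeff (pv f $ i) e" if "i < k'" "e < d" for i e
      unfolding pv_def f_def using that by (simp add: nth_default_def)
    have ag2: "coeff ((GT *\<^sub>v u) $ j) e = coeff ((GT *\<^sub>v pv f) $ j) e" if "j < n" "e < d" for j e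
      by (rule mv_low[OF GT u(1) pvc, where d=d]) (use ag that in auto)
    have "trn (d * n) (sigma n (GT *\<^sub>v u)) = trn (d * n) (sigma n (GT *\<^sub>v pv f))"
    proof
      fix j show "trn (d * n) (sigma n (GT *\<^sub>v u)) j = trn (d * n) (sigma n (GT *\<^sub>v pv f)) j"
      proof (cases "j < d * n")
        case True
        have "sigma n (GT *\<^sub>v u) j = sigma n (GT *\<^sub>v pv f) j"
          by (rule sigma_low[OF n _ _ ag2 True]) (use GT u pvc in auto)
        then show ?thesis unfolding trn_def by simp
      qed (simp add: trn_def)
    qed
    thus "y \<in> \<psi> ` Fd" unfolding v u \<psi>_def using fF by blast
  qed
  moreover have "finite Fd" unfolding Fd_def by (simp add: finite_PiE)
  moreover have "card Fd = (card (UNIV :: 'a set) ^ d) ^ k'" unfolding Fd_def by (simp add: card_PiE)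
  ultimately show "finite (trn (d * n) ` T) \<and> card (trn (d * n) ` T) \<le> (card (UNIV :: 'a set) ^ d) ^ k'"
    by (metis card_image_le card_mono finite_imageI finite_subset le_trans)
qed


locale fullctx = stabctx q \<beta> n k m S0 for q and \<beta> :: "'b::{finite,field}" and n k m S0 +
  assumes Fq2: "is_Fq2_space (tau q \<beta> ` stab q n S0)"
begin

lemma T_smult: "v \<in> tau q \<beta> ` stab q n S0 \<Longrightarrow> (\<lambda>i. c * v i) \<in> tau q \<beta> ` stab q n S0"
  using Fq2 unfolding is_Fq2_space_def by blast

lemma herm_S:
  assumes s: "s \<in> stab q n S0" and y: "y \<in> CP q" and H: "\<And>s''. s'' \<in> stab q n S0 \<Longrightarrow> sp q (snd s'') y = 0"
  shows "herm q (tau q \<beta> s) (tp q \<beta> y) = 0"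
  unfolding tau_tp
proof (rule herm_of_sp[OF S_CP[OF s] y])
  fix c
  have "(\<lambda>i. c * tau q \<beta> s i) \<in> tau q \<beta> ` stab q n S0" using T_smult s by blast
  then obtain s'' where s'': "s'' \<in> stab q n S0" "tau q \<beta> s'' = (\<lambda>i. c * tau q \<beta> s i)" by auto
  show "\<exists>x'\<in>CP q. tp q \<beta> x' = (\<lambda>i. c * tp q \<beta> (snd s) i) \<and> sp q x' y = 0"
    using s'' S_CP H unfolding tau_tp by blast
qed

lemma tau_fin: "E \<in> carrier (pauli_group q) \<Longrightarrow> finite {i. tau q \<beta> E i \<noteq> 0}"
  unfolding tau_tp using supp_tp CP_fin carrier_P by metis

lemma T_dual: "tau q \<beta> ` stab q n S0 \<subseteq> herm_dual q (tau q \<beta> ` stab q n S0)"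
proof
  fix v assume "v \<in> tau q \<beta> ` stab q n S0"
  then obtain s' where s': "s' \<in> stab q n S0" "v = tau q \<beta> s'" by auto
  have "v \<in> Gamma (\<lambda>_. True)" unfolding Gamma_def s'(2) using tau_fin S_P s'(1) by blast
  moreover have "herm q u v = 0" if uT: "u \<in> tau q \<beta> ` stab q n S0" for u
  proof -
    obtain s where s: "s \<in> stab q n S0" "u = tau q \<beta> s" using uT by auto
    show ?thesis unfolding s s'(2) tau_tp[of _ _ s'] by (rule herm_S[OF s(1) S_CP[OF s'(1)]]) (use S_comm s'(1) in blast)
  qed
  ultimately show "v \<in> herm_dual q (tau q \<beta> ` stab q n S0)" unfolding herm_dual_def by blast
qed

lemma wt_eq: "E \<in> carrier (pauli_group q) \<Longrightarrow> pauli_wt E = seq_wt (tau q \<beta> E)"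
proof -
  assume "E \<in> carrier (pauli_group q)"
  hence "snd E \<in> CP q" using carrier_P by blast
  hence "{i. tau q \<beta> E i \<noteq> 0} = pauli_supp E" unfolding tau_tp using supp_tp
    by (simp add: pauli_supp_def supp2_def)
  thus ?thesis unfolding pauli_wt_def seq_wt_def by simp
qed

lemma FD:
  assumes fd: "free_distance q n S0 d"
  shows "d \<in> seq_wt ` (herm_dual q (tau q \<beta> ` stab q n S0) - tau q \<beta> ` stab q n S0) \<and>
    (\<forall>v \<in> herm_dual q (tau q \<beta> ` stab q n S0) - tau q \<beta> ` stab q n S0. d \<le> seq_wt v)"
proof -
  define TT where "TT = tau q \<beta> ` stab q n S0"
  define Cent where "Cent = {e \<in> carrier (pauli_group q). \<forall>s \<in> stab q n S0. pauli_mult q e s = pauli_mult q s e}"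
  define ZS where "ZS = {pauli_mult q z s | z s. z \<in> center_of (pauli_group q) \<and> s \<in> stab q n S0}"
  define A where "A = Cent - ZS"
  have fdA: "d \<in> pauli_wt ` A \<and> (\<forall>e\<in>A. d \<le> pauli_wt e)"
    using fd unfolding free_distance_def Let_def Cent_def ZS_def A_def by simp
  have a: "tau q \<beta> e \<in> herm_dual q TT - TT" if e: "e \<in> A" for e
  proof -
    have eC: "e \<in> Cent" "e \<notin> ZS" using e A_def by auto
    have ec: "e \<in> carrier (pauli_group q)" using eC Cent_def by auto
    have ecp: "snd e \<in> CP q" using ec carrier_P by blast
    have "tau q \<beta> e \<in> Gamma (\<lambda>_. True)" unfolding Gamma_def using tau_fin[OF ec] by simp
    moreover have "herm q u (tau q \<beta> e) = 0" if uT: "u \<in> TT" for u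
    proof -
      obtain s where s: "s \<in> stab q n S0" "u = tau q \<beta> s" using uT TT_def by auto
      have "sp q (snd s'') (snd e) = 0" if "s'' \<in> stab q n S0" for s''
      proof -
        have "pauli_mult q e s'' = pauli_mult q s'' e" using eC(1) that Cent_def by auto
        thus ?thesis using sp_comm[of q s'' e] by simp
      qed
      thus ?thesis unfolding s(2) tau_tp[of _ _ e] using herm_S[OF s(1) ecp] by blast
    qed
    moreover have "tau q \<beta> e \<notin> TT"
    proof
      assume "tau q \<beta> e \<in> TT"
      then obtain s where s: "s \<in> stab q n S0" "tau q \<beta> e = tau q \<beta> s" using TT_def by auto
      have sn: "snd e = snd s" using tp_inj[OF ecp S_CP[OF s(1)]] s(2) unfolding tau_tp by simp
      have fs1: "fst e \<in> Fp" using ec unfolding carrier_P by blast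
      have fs2: "fst s \<in> Fp" using S_P[OF s(1)] unfolding carrier_P by blast
      note fs = fs1 fs2
      define z where "z = (fst e - fst s, \<lambda>_::nat. 0 :: 'b, \<lambda>_::nat. 0 :: 'b)"
      have zc: "z \<in> center_of (pauli_group q)" unfolding z_def using phase_center_P fs by simp
      obtain c a b where sp: "s = (c, a, b)" by (cases s) auto
      have "pauli_mult q z s = e" unfolding z_def sp using sn sp
        by (cases e) (simp add: pauli_mult_simp)
      hence "e \<in> ZS" unfolding ZS_def using zc s(1) by blast
      thus False using eC by simp
    qed
    ultimately show ?thesis unfolding herm_dual_def TT_def by blast
  qed
  have b: "\<exists>e\<in>A. tau q \<beta> e = v" if v: "v \<in> herm_dual q TT - TT" for v
  proof -
    have vG: "finite {i. v i \<noteq> 0}" and vh: "\<And>u. u \<in> TT \<Longrightarrow> herm q u v = 0" and vT: "v \<notin> TT"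
      using v unfolding herm_dual_def Gamma_def by auto
    define P where "P x = (\<lambda>p :: 'b \<times> 'b. fst p \<in> Fq q \<and> snd p \<in> Fq q \<and> x = \<beta> * fst p + \<beta> ^ q * snd p)" for x
    define a where "a i = fst (SOME p. P (v i) p)" for i
    define b where "b i = snd (SOME p. P (v i) p)" for i
    have ab: "a i \<in> Fq q \<and> b i \<in> Fq q \<and> v i = \<beta> * a i + \<beta> ^ q * b i" for i
    proof -
      obtain a0 b0 where "a0 \<in> Fq q" "b0 \<in> Fq q" "v i = \<beta> * a0 + \<beta> ^ q * b0" using nb_surj by blast
      hence "P (v i) (a0, b0)" unfolding P_def by simp
      hence "P (v i) (SOME p. P (v i) p)" by (rule someI)
      thus ?thesis unfolding P_def a_def b_def by simp
    qed
    have "{i. a i \<noteq> 0 \<or> b i \<noteq> 0} \<subseteq> {i. v i \<noteq> 0}" using ab nb_zero by auto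
    hence yc: "(a, b) \<in> CP q" unfolding CP_def using ab finite_subset[OF _ vG] by auto
    have ty: "tp q \<beta> (a, b) = v" unfolding tp_def using ab by (simp add: fun_eq_iff)
    define e where "e = (0 :: 'b, a, b)"
    have ec: "e \<in> carrier (pauli_group q)" unfolding e_def carrier_P using yc by simp
    have "pauli_mult q e s = pauli_mult q s e" if s: "s \<in> stab q n S0" for s
    proof -
      have "herm q (tp q \<beta> (snd s)) (tp q \<beta> (a, b)) = 0" using vh[of "tau q \<beta> s"] s ty unfolding TT_def tau_tp by auto
      hence "sp q (snd s) (a, b) = 0" by (rule sp_of_herm[OF S_CP[OF s] yc])
      thus ?thesis using sp_comm[of q s e] unfolding e_def by simp
    qed
    hence eCent: "e \<in> Cent" unfolding Cent_def using ec by blast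
    have "e \<notin> ZS"
    proof
      assume "e \<in> ZS"
      then obtain z s where zs: "z \<in> center_of (pauli_group q)" "s \<in> stab q n S0" "e = pauli_mult q z s"
        unfolding ZS_def by blast
      have "snd e = padd (snd z) (snd s)" using zs(3) snd_pauli_mult by metis
      also have "\<dots> = snd s" unfolding center_P[OF zs(1)] padd_def by simp
      finally have "v = tau q \<beta> s" unfolding tau_tp using ty e_def by simp
      thus False using vT zs(2) TT_def by blast
    qed
    hence "e \<in> A" unfolding A_def using eCent by blast
    moreover have "tau q \<beta> e = v" unfolding tau_tp e_def using ty by simp
    ultimately show ?thesis by blast
  qed
  have wA: "pauli_wt e = seq_wt (tau q \<beta> e)" if "e \<in> A" for e
    using that wt_eq unfolding A_def Cent_def by blast
  obtain e0 where e0: "e0 \<in> A" "d = pauli_wt e0" using fdA by blast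
  have "d \<in> seq_wt ` (herm_dual q TT - TT)" using a[OF e0(1)] wA[OF e0(1)] e0(2) by blast
  moreover have "d \<le> seq_wt v" if "v \<in> herm_dual q TT - TT" for v
    using b[OF that] fdA wA by force
  ultimately show ?thesis unfolding TT_def by blast
qed

end

lemma arith_final:
  fixes N K m :: nat
  assumes le: "K \<le> N" and all: "\<And>t. (t + 1) * N \<le> K * (t + 1 + m)"
  shows "N = K"
proof (rule ccontr)
  assume "N \<noteq> K"
  hence NK: "K + 1 \<le> N" using le by simp
  have "(K * m + 1) * N \<le> K * (K * m + 1 + m)" using all[of "K * m"] by simp
  moreover have "(K * m + 1) * (K + 1) \<le> (K * m + 1) * N" using NK by (rule mult_le_mono2)
  ultimately have "(K * m + 1) * (K + 1) \<le> K * (K * m + 1 + m)" by linarith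
  thus False by (simp add: algebra_simps)
qed

theorem mainTheorem3:
  fixes q n k m \<delta> d\<^sub>f :: nat and \<beta> :: "'b::{finite,field}" and S0 :: "'b pauli set"
  assumes "card (UNIV :: 'b set) = q ^ 2"
    and "0 < n" and "k \<le> n"
    and "normal_basis q \<beta>"
    and "conv_stab_code q n k m S0"
    and "is_Fq2_space (tau q \<beta> ` stab q n S0)"
    and "\<exists>k'. conv_code n k' \<delta> {u \<in> carrier_vec n. sigma n u \<in> tau q \<beta> ` stab q n S0}"
    and "free_distance q n S0 d\<^sub>f"
  shows "\<exists>k' (C :: 'b poly vec set). n - k = 2 * k' \<and> conv_code n k' \<delta> C \<and>
           sigma n ` C \<subseteq> herm_dual q (sigma n ` C) \<and>
           d\<^sub>f \<in> seq_wt ` (herm_dual q (sigma n ` C) - sigma n ` C) \<and>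
           (\<forall>v \<in> herm_dual q (sigma n ` C) - sigma n ` C. d\<^sub>f \<le> seq_wt v)"
proof -
  interpret fullctx q \<beta> n k m S0
    by unfold_locales (use assms in auto)
  define TT where "TT = tau q \<beta> ` stab q n S0"
  define Ccl where "Ccl = {u \<in> carrier_vec n. sigma n u \<in> TT}"
  obtain k' where cc: "conv_code n k' \<delta> Ccl" using assms(7) unfolding Ccl_def TT_def by blast
  then obtain G H where G: "G \<in> carrier_mat k' n" and H: "H \<in> carrier_mat n k'" and GH: "G * H = 1\<^sub>m k'"
    and Cdef: "Ccl = {transpose_mat G *\<^sub>v u | u. u \<in> carrier_vec k'}"
    unfolding conv_code_def by blast
  have TG: "TT \<subseteq> Gamma (\<lambda>_. True)" using Fq2 unfolding is_Fq2_space_def TT_def by blast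
  have R1: "sigma n (transpose_mat G *\<^sub>v u) \<in> TT" if "u \<in> carrier_vec k'" for u
  proof -
    have "transpose_mat G *\<^sub>v u \<in> Ccl" unfolding Cdef using that by blast
    thus ?thesis unfolding Ccl_def by blast
  qed
  have R2: "\<exists>u \<in> carrier_vec k'. v = sigma n (transpose_mat G *\<^sub>v u)" if v: "v \<in> TT" for v
  proof -
    have "finite {i. v i \<noteq> 0}" using TG v unfolding Gamma_def by blast
    then obtain w where w: "w \<in> carrier_vec n" "sigma n w = v" using sigma_surj[OF npos] by blast
    hence "w \<in> Ccl" unfolding Ccl_def using v by blast
    then obtain u where "u \<in> carrier_vec k'" "w = transpose_mat G *\<^sub>v u" unfolding Cdef by blast
    thus ?thesis using w by blast
  qed
  have sC: "sigma n ` Ccl = TT"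
  proof
    show "sigma n ` Ccl \<subseteq> TT" unfolding Ccl_def by blast
    show "TT \<subseteq> sigma n ` Ccl"
    proof
      fix v assume v: "v \<in> TT"
      obtain u where u: "u \<in> carrier_vec k'" "v = sigma n (transpose_mat G *\<^sub>v u)" using R2[OF v] by blast
      have "transpose_mat G *\<^sub>v u \<in> Ccl" unfolding Cdef using u by blast
      thus "v \<in> sigma n ` Ccl" using u by blast
    qed
  qed
  note RI = rank_ineqs[OF G H GH npos R1 R2]
  have cardU: "card (UNIV :: 'b set) = q ^ 2" by (rule cardq)
  have q1: "1 < q" using q_ge2 by simp
  obtain X where X: "X \<subseteq> trn n ` TT" "card X = card (UNIV :: 'b set) ^ k'" using RI(1) by blast
  define Z where "Z = (\<lambda>x. trn n (tp q \<beta> x)) ` snd ` S0"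
  have "card (snd ` S0) > 0" using card_S0 q1 by simp
  hence finS0: "finite (snd ` S0)" using card_gt_0_iff by blast
  have "trn n ` TT \<subseteq> Z"
  proof
    fix y assume "y \<in> trn n ` TT"
    then obtain s where s: "s \<in> stab q n S0" "y = trn n (tau q \<beta> s)" unfolding TT_def by blast
    obtain M where M: "M \<in> S0" "\<forall>i<n. fst (snd s) i = fst (snd M) i \<and> snd (snd s) i = snd (snd M) i"
      using trunc_S0[OF s(1)] by blast
    have "trn n (tau q \<beta> s) = trn n (tp q \<beta> (snd M))"
      unfolding tau_tp trn_def tp_def using M(2) by (simp add: fun_eq_iff)
    thus "y \<in> Z" unfolding Z_def s(2) using M(1) by blast
  qed
  hence "card X \<le> card Z" using X(1) finS0 unfolding Z_def by (intro card_mono) auto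
  also have "card Z \<le> card (snd ` S0)" unfolding Z_def by (rule card_image_le[OF finS0])
  finally have "q ^ (2 * k') \<le> q ^ (n - k)" using X(2) card_S0 cardU by (simp add: power_mult)
  hence dir1: "2 * k' \<le> n - k" using power_le_imp_le_exp[OF q1] by blast
  have dir2: "(t + 1) * (n - k) \<le> (2 * k') * (t + 1 + m)" for t
  proof -
    define d where "d = t + 1 + m"
    define Y where "Y = tp q \<beta> ` snd ` stab_t q n S0 t"
    have sp_t: "stab_t q n S0 t \<subseteq> carrier (pauli_win q ((t + 1) * n + m))" "snd ` stab_t q n S0 t \<subseteq> snd ` stab q n S0"
      using stab_t_props by blast+
    have YT: "Y \<subseteq> TT"
    proof
      fix y assume "y \<in> Y"
      then obtain x where x: "x \<in> snd ` stab_t q n S0 t" "y = tp q \<beta> x" unfolding Y_def by blast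
      then obtain s where s: "s \<in> stab q n S0" "x = snd s" using sp_t(2) by blast
      show "y \<in> TT" unfolding TT_def x(2) s(2) tau_tp[symmetric] using s(1) by blast
    qed
    have scW: "snd s \<in> CP q \<and> supp2 (snd s) \<subseteq> {..<(t + 1) * n + m}" if "s \<in> stab_t q n S0 t" for s
    proof -
      have "s \<in> carrier (pauli_win q ((t + 1) * n + m))" using sp_t(1) that by blast
      thus ?thesis unfolding carrier_W by blast
    qed
    have "(t + 1) * n + m \<le> d * n" unfolding d_def using npos by (simp add: algebra_simps)
    have Yfix: "trn (d * n) y = y" if "y \<in> Y" for y
    proof -
      obtain s where s: "s \<in> stab_t q n S0 t" "y = tp q \<beta> (snd s)" using \<open>y \<in> Y\<close> unfolding Y_def by blast
      have sc: "snd s \<in> CP q" "supp2 (snd s) \<subseteq> {..<(t + 1) * n + m}" using scW[OF s(1)] by blast+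
      have "{i. y i \<noteq> 0} \<subseteq> {..<d * n}" unfolding s(2) supp_tp[OF sc(1)] using sc(2) \<open>(t + 1) * n + m \<le> d * n\<close> by auto
      thus ?thesis unfolding trn_def by (auto simp: fun_eq_iff)
    qed
    have "trn (d * n) ` Y = Y" using Yfix by (auto simp: image_iff)
    hence "Y \<subseteq> trn (d * n) ` TT" using YT by blast
    have inj: "inj_on (tp q \<beta>) (snd ` stab_t q n S0 t)"
    proof (rule inj_onI)
      fix x y assume "x \<in> snd ` stab_t q n S0 t" "y \<in> snd ` stab_t q n S0 t" "tp q \<beta> x = tp q \<beta> y"
      moreover have "x \<in> CP q" "y \<in> CP q" using calculation(1,2) scW by blast+
      ultimately show "x = y" using tp_inj by blast
    qed
    have "q ^ ((t + 1) * (n - k)) = card Y" unfolding Y_def card_image[OF inj] card_stab_t ..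
    also have "\<dots> \<le> card (trn (d * n) ` TT)"
      using \<open>Y \<subseteq> trn (d * n) ` TT\<close> RI(2)[of d] by (intro card_mono) auto
    also have "\<dots> \<le> (card (UNIV :: 'b set) ^ d) ^ k'" using RI(2)[of d] by blast
    also have "\<dots> = q ^ (2 * d * k')" unfolding cardU by (simp only: power_mult)
    also have "2 * d * k' = (2 * k') * (t + 1 + m)" unfolding d_def by (simp add: algebra_simps)
    finally show ?thesis using power_le_imp_le_exp[OF q1] by blast
  qed
  have nk: "n - k = 2 * k'" using arith_final[OF dir1 dir2] .
  show ?thesis
    apply (rule exI[of _ k'], rule exI[of _ Ccl])
    using nk cc T_dual FD[OF assms(8)] unfolding sC TT_def by blast
qed


end
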